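(* Let $s\ge1$, let $q$ be a prime power, let $\mathbf{T}:\mathbb{N}_0\to\mathbb{N}_0$ with $\mathbf{T}(m)\le m$, and let $C^{(1)},\ldots,C^{(s)}\in\mathbb{F}_q^{\mathbb{N}\times\mathbb{N}_0}$ be finite-row generating matrices satisfying the following condition: for every $m$ with $m>\mathbf{T}(m)$ and all integers $d_1,\ldots,d_s\ge0$ with $1\le d_1+\cdots+d_s\le m-\mathbf{T}(m)$, the $(d_1+\cdots+d_s)\times m$ matrix over $\mathbb{F}_q$ with rows $(c^{(i)}_{j,0},\ldots,c^{(i)}_{j,m-1})$, $1\le j\le d_i$, $1\le i\le s$, has rank $d_1+\cdots+d_s$. Let $\alpha$ be a $q$-adic integer with representation $\alpha=\sum_{i\ge0}a_iq^i$ and let $s_n=n+\alpha$ ($n\ge0$). Let $\mathcal{S}$ be the sequence produced by Algorithm 2 with these matrices, the input $(s_n)$, and any choice of bijections $\psi_r,\lambda_{i,j}$. Then for every $N\ge1$, $$N D_N^*(\mathcal{S})\le (q-a_0)\Delta_q(\mathbf{T}(0),0,s)+\sum_{j=1}^{r-1}(q-1-a_j)\Delta_q(\mathbf{T}(j),j,s)+\sum_{j=0}^{r}b_j\Delta_q(\mathbf{T}(j),j,s),$$ where $r=\lfloor\log_q N\rfloor$ and $\sum_{j=0}^rb_jq^j$ is the base $q$ representation of $N'=N-q^r+\sum_{j=0}^{r-1}a_jq^j$.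
   Context: $\mathbb{F}_q$ is the finite field with $q$ elements, $D_q=\{0,\ldots,q-1\}$; $\mathbb{Z}_q$ is the ring of $q$-adic integers, each $z\in\mathbb{Z}_q$ having a unique representation $z=\sum_{r\ge0}a_rq^r$, $a_r\in D_q$. A matrix $(c^{(i)}_{j,r})_{j\ge1,r\ge0}$ is finite-row if each row has finitely many nonzero entries. Algorithm 2: choose bijections $\psi_r:D_q\to\mathbb{F}_q$ ($r\ge0$), finite-row matrices $C^{(i)}=(c^{(i)}_{j,r})$, bijections $\lambda_{i,j}:\mathbb{F}_q\to D_q$ and $(s_n)$ in $\mathbb{Z}_q$; with $s_n=\sum_ra_r'q^r$ put $x_n^{(i)}=\sum_{j\ge1}\lambda_{i,j}(\sum_rc^{(i)}_{j,r}\psi_r(a_r'))q^{-j}$, $\boldsymbol{x}_n=(x_n^{(1)},\ldots,x_n^{(s)})\in[0,1]^s$. Star discrepancy: $D_N^*(\mathcal{S})=\sup_J|A(J)/N-\mathrm{vol}(J)|$, sup over subintervals $J\subseteq[0,1]^s$ with one vertex at the origin, $A(J)=\#\{0\le n<N:\boldsymbol{x}_n\in J\}$. Elementary interval in base $q$: $\prod_i[a_iq^{-d_i},(a_i+1)q^{-d_i})$, $d_i\ge0$, $0\le a_i<q^{d_i}$. For $0\le t\le m$, a $(t,m,s)$-net in base $q$ is a set of $q^m$ points in $[0,1)^s$ with exactly $q^t$ points in every elementary interval of volume $q^{t-m}$. $\Delta_q(t,m,s)$ denotes any quantity such that $q^mD^*_{q^m}(\mathcal{P})\le\Delta_q(t,m,s)$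 for every $(t,m,s)$-net $\mathcal{P}$ in base $q$ (e.g. Niederreiter's bound $q^t\sum_{i=0}^{s-1}\binom{s-1}{i}\binom{m-t}{i}\lfloor q/2\rfloor^i$ for $q>2$). *)

theory Defs
  imports Complex_Main "Jordan_Normal_Form.DL_Rank"
begin

text \<open>Points in [0,1]^s are functions nat => real; coordinates i = 1..s are used.
  Sequences / point sets are indexed by n (first N points are n < N).\<close>

definition star_disc :: "nat \<Rightarrow> nat \<Rightarrow> (nat \<Rightarrow> nat \<Rightarrow> real) \<Rightarrow> real" where
  "star_disc s N x =
     (SUP u \<in> {u :: nat \<Rightarrow> real. \<forall>i\<in>{1..s}. 0 \<le> u i \<and> u i \<le> 1}.
        \<bar>real (card {n. n < N \<and> (\<forall>i\<in>{1..s}. 0 \<le> x n i \<and> x n i < u i)}) / real N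
          - (\<Prod>i=1..s. u i)\<bar>)"

text \<open>(t,m,s)-net in base q given as the first q^m points of P (repetitions allowed).
  An elementary interval with exponents d_i has volume q^(t-m) iff sum d_i = m - t.\<close>
definition is_net :: "nat \<Rightarrow> nat \<Rightarrow> nat \<Rightarrow> nat \<Rightarrow> (nat \<Rightarrow> nat \<Rightarrow> real) \<Rightarrow> bool" where
  "is_net q t m s P \<longleftrightarrow> t \<le> m \<and>
     (\<forall>n < q ^ m. \<forall>i\<in>{1..s}. 0 \<le> P n i \<and> P n i < 1) \<and>
     (\<forall>(d :: nat \<Rightarrow> nat) (a :: nat \<Rightarrow> nat).
        (\<forall>i\<in>{1..s}. a i < q ^ d i) \<and> (\<Sum>i=1..s. d i) = m - t \<longrightarrow>
        card {n. n < q ^ m \<and> (\<forall>i\<in>{1..s}.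
               real (a i) / real q ^ d i \<le> P n i \<and> P n i < real (a i + 1) / real q ^ d i)}
          = q ^ t)"

text \<open>Digit r of the q-adic integer n + alpha, alpha given by its digit sequence.\<close>
definition padic_add_digit :: "nat \<Rightarrow> nat \<Rightarrow> (nat \<Rightarrow> nat) \<Rightarrow> nat \<Rightarrow> nat" where
  "padic_add_digit q n \<alpha> r = ((n + (\<Sum>k\<le>r. \<alpha> k * q ^ k)) div q ^ r) mod q"

text \<open>Algorithm 2 with input s_n = n + alpha: coordinate i of point n.
  C i j r = c^(i)_{j,r}; psi r : D_q -> F_q; lam i j : F_q -> D_q.
  The inner sum is over the (finite) support of row j of C^(i).\<close>
definition alg2_point :: "(nat \<Rightarrow> nat \<Rightarrow> nat \<Rightarrow> 'f::{field,finite}) \<Rightarrow> (nat \<Rightarrow> nat \<Rightarrow> 'f)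
    \<Rightarrow> (nat \<Rightarrow> nat \<Rightarrow> 'f \<Rightarrow> nat) \<Rightarrow> (nat \<Rightarrow> nat) \<Rightarrow> nat \<Rightarrow> nat \<Rightarrow> real" where
  "alg2_point C \<psi> lam \<alpha> n i =
     (\<Sum>j. real (lam i (Suc j)
        (\<Sum>r\<in>{r. C i (Suc j) r \<noteq> 0}. C i (Suc j) r * \<psi> r (padic_add_digit (card (UNIV :: 'f set)) n \<alpha> r)))
        / real (card (UNIV :: 'f set)) ^ Suc j)"

definition gen_submatrix :: "nat \<Rightarrow> (nat \<Rightarrow> nat \<Rightarrow> nat \<Rightarrow> 'f::field) \<Rightarrow> (nat \<Rightarrow> nat) \<Rightarrow> nat \<Rightarrow> 'f mat" where
  "gen_submatrix s C d m =
     mat_of_rows m (concat (map (\<lambda>i. map (\<lambda>j. vec m (\<lambda>r. C i j r)) [1..<d i + 1]) [1..<s + 1]))"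

end

theory Submission
  imports Defs
begin

context vec_space begin
lemma full_rank_colspace:
  assumes A: "A \<in> carrier_mat n m" and r: "rank A = n"
  shows "carrier_vec n \<subseteq> span (set (cols A))"
proof -
  let ?X = "span (set (cols A))"
  have cs: "set (cols A) \<subseteq> carrier V" using A unfolding cols_def by auto
  have sub: "subspace class_ring ?X V"
    using cs span_is_subspace by auto
  have vsX: "vectorspace class_ring (vs ?X)" using sub subspace_is_vs by auto
  have fdX: "vectorspace.fin_dim class_ring (vs ?X)" using fin_dim_span_cols A by auto
  obtain b where b: "vectorspace.basis class_ring (vs ?X) b"
    using vectorspace.finite_basis_exists[OF vsX fdX] by blast
  have bX: "b \<subseteq> ?X" and lib: "LinearCombinations.module.lin_indpt class_ring (vs ?X) b"
    using b vectorspace.basis_def[OF vsX] by auto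
  have bV: "b \<subseteq> carrier V" using bX sub unfolding subspace_def submodule_def by auto
  have li: "lin_indpt b"
    by (metis LinearCombinations.module.span_li_not_depend(2) vsX b
    sub is_module local.carrier_vs_is_self submodule_def vectorspace.basis_def)
  have finb: "finite b" using fin_dim_li_fin bV li by auto
  have "card b = vectorspace.dim class_ring (vs ?X)"
    using vectorspace.dim_basis[OF vsX] b finb by auto
  also have "\<dots> = n" using r unfolding rank_def by simp
  finally have cb: "card b = dim" using dim_is_n by simp
  have "basis b" by (rule dim_li_is_basis) (use finb bV li cb in auto)
  then have "span b = carrier V" unfolding basis_def by auto
  moreover have "span b \<subseteq> ?X" by (rule span_is_subset[OF bX span_is_submodule]) (use cs in auto)
  ultimately show ?thesis by auto
qed
end

lemma full_rank_surj:
  fixes A :: "'a::field mat"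
  assumes A: "A \<in> carrier_mat k m" and r: "vec_space.rank k A = k" and y: "y \<in> carrier_vec k"
  shows "\<exists>x\<in>carrier_vec m. A *\<^sub>v x = y"
proof -
  have "y \<in> vec_space.col_space k A"
    using vec_space.full_rank_colspace[OF A r] y unfolding vec_space.col_space_def by auto
  then show ?thesis using vec_space.col_space_eq[OF A] A by auto
qed
lemma my_card_carrier_vec: "card (carrier_vec n:: 'b::finite vec set) = card (UNIV::'b set) ^ n"
proof -
  let ?A = "UNIV::'b set"
  let ?B = "{xs. set xs \<subseteq> ?A \<and> length xs = n}"
  let ?C = "(carrier_vec n:: 'b::finite vec set)"
  have "card ?C = card ?B"
  proof -
    have "bij_betw (list_of_vec) ?C ?B"
    proof (unfold bij_betw_def, auto)
      show "inj_on list_of_vec (carrier_vec n)"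
        by (metis inj_on_def vec_list)
      fix x::"'b list"
      assume n: "n = length x"
      show "x \<in> list_of_vec ` carrier_vec (length x)"
        by (rule image_eqI[of _ _ "vec_of_list x"]) (simp add: list_vec, rule carrier_vecI, simp)
    qed
    thus ?thesis using bij_betw_same_card by blast
  qed
  also have "... = card ?A ^ n"
    by (rule card_lists_length_eq, simp)
  finally show ?thesis .
qed

lemma my_finite_carrier_vec[simp]: "finite (carrier_vec n:: 'b::finite vec set)"
  by (rule card_ge_0_finite, unfold my_card_carrier_vec, auto simp: finite_UNIV_card_ge_0)

lemma fiber_card:
  fixes A :: "'a::{field,finite} mat"
  assumes A: "A \<in> carrier_mat k m" and r: "vec_space.rank k A = k" and y: "y \<in> carrier_vec k"
  shows "card {x \<in> carrier_vec m. A *\<^sub>v x = y} * card (UNIV::'a set) ^ k = card (UNIV::'a set) ^ m"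
proof -
  define F where "F y = {x \<in> carrier_vec m. A *\<^sub>v x = y}" for y
  have eq: "card (F z) = card (F (0\<^sub>v k))" if z: "z \<in> carrier_vec k" for z
  proof -
    obtain x0 where x0: "x0 \<in> carrier_vec m" "A *\<^sub>v x0 = z" using full_rank_surj[OF A r z] by blast
    have "bij_betw (\<lambda>x. x + x0) (F (0\<^sub>v k)) (F z)"
    proof (rule bij_betw_byWitness[where f' = "\<lambda>x. x - x0"])
      show "\<forall>a\<in>F (0\<^sub>v k). a + x0 - x0 = a" unfolding F_def using x0 by auto
      show "\<forall>a\<in>F z. a - x0 + x0 = a" unfolding F_def using x0 by auto
      show "(\<lambda>x. x + x0) ` F (0\<^sub>v k) \<subseteq> F z"
        unfolding F_def using x0 A by (auto simp: mult_add_distrib_mat_vec)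
      show "(\<lambda>x. x - x0) ` F z \<subseteq> F (0\<^sub>v k)"
        unfolding F_def using x0 A by (auto simp: mult_minus_distrib_mat_vec)
    qed
    then show ?thesis by (simp add: bij_betw_same_card)
  qed
  have "card (UNIV::'a set) ^ m = card (carrier_vec m :: 'a vec set)" by (simp add: my_card_carrier_vec)
  also have "\<dots> = (\<Sum>x\<in>(carrier_vec m :: 'a vec set). (1::nat))" by simp
  also have "\<dots> = (\<Sum>z\<in>(carrier_vec k :: 'a vec set). \<Sum>x\<in>{x \<in> carrier_vec m. A *\<^sub>v x = z}. (1::nat))"
    by (rule sum.group[symmetric]) (use A in auto)
  also have "\<dots> = (\<Sum>z\<in>(carrier_vec k :: 'a vec set). card (F z))"
    by (simp add: F_def)
  also have "\<dots> = (\<Sum>z\<in>(carrier_vec k :: 'a vec set). card (F (0\<^sub>v k)))"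
    by (rule sum.cong[OF refl]) (rule eq)
  also have "\<dots> = card (F (0\<^sub>v k)) * card (UNIV::'a set) ^ k" by (simp add: my_card_carrier_vec)
  finally show ?thesis using eq[OF y] unfolding F_def by simp
qed

definition Lf :: "nat \<Rightarrow> (nat \<Rightarrow> nat) \<Rightarrow> nat \<Rightarrow> nat" where
  "Lf q c m = (\<Sum>r<m. c r * q ^ r)"

lemma Lf_Suc: "Lf q c (Suc m) = c 0 + q * Lf q (\<lambda>r. c (Suc r)) m"
  unfolding Lf_def sum.lessThan_Suc_shift by (simp add: sum_distrib_left mult_ac del: sum.lessThan_Suc)

lemma Lf_less: "(\<And>r. r < m \<Longrightarrow> c r < q) \<Longrightarrow> Lf q c m < q ^ m"
proof (induction m arbitrary: c)
  case 0 then show ?case by (simp add: Lf_def)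
next
  case (Suc m)
  have h: "Lf q (\<lambda>r. c (Suc r)) m < q ^ m" using Suc by auto
  have c0: "c 0 < q" using Suc by auto
  have "q * (Lf q (\<lambda>r. c (Suc r)) m + 1) \<le> q * q ^ m" using h by (intro mult_le_mono2) simp
  then show ?case using c0 by (simp add: Lf_Suc algebra_simps)
qed

lemma Lf_digit: "(\<And>r. r < m \<Longrightarrow> c r < q) \<Longrightarrow> j < m \<Longrightarrow> Lf q c m div q ^ j mod q = c j"
proof (induction m arbitrary: c j)
  case 0 then show ?case by simp
next
  case (Suc m)
  have q: "q > 0" using Suc.prems(1)[of 0] by auto
  show ?case
  proof (cases j)
    case 0 then show ?thesis using Suc.prems by (simp add: Lf_Suc)
  next
    case (Suc j')
    have "Lf q c (Suc m) div q ^ j = (c 0 + q * Lf q (\<lambda>r. c (Suc r)) m) div q div q ^ j'"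
      by (simp add: Lf_Suc Suc div_mult2_eq)
    also have "(c 0 + q * Lf q (\<lambda>r. c (Suc r)) m) div q = Lf q (\<lambda>r. c (Suc r)) m"
      using Suc.prems(1)[of 0] q by simp
    finally show ?thesis using Suc.IH[of "\<lambda>r. c (Suc r)" j'] Suc.prems \<open>j = Suc j'\<close> by auto
  qed
qed

lemma Lf_digits_self: "n < q ^ m \<Longrightarrow> Lf q (\<lambda>r. n div q ^ r mod q) m = n"
proof (induction m arbitrary: n)
  case 0 then show ?case by (simp add: Lf_def)
next
  case (Suc m)
  have q: "q > 0" using Suc.prems by (cases q) auto
  have "n div q < q ^ m" using Suc.prems q by (simp add: div_less_iff_less_mult mult.commute)
  then have "Lf q (\<lambda>r. n div q div q ^ r mod q) m = n div q" by (rule Suc.IH)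
  then show ?case by (simp add: Lf_Suc div_mult2_eq mult.commute)
qed

lemma digits_eq_imp_eq:
  fixes n n' q m :: nat
  assumes "n < q ^ m" "n' < q ^ m" "\<And>r. r < m \<Longrightarrow> n div q ^ r mod q = n' div q ^ r mod q"
  shows "n = n'"
proof -
  have "Lf q (\<lambda>r. n div q ^ r mod q) m = Lf q (\<lambda>r. n' div q ^ r mod q) m"
    unfolding Lf_def using assms(3) by (intro sum.cong) auto
  then show ?thesis using Lf_digits_self assms(1,2) by metis
qed

fun Yf :: "nat \<Rightarrow> (nat \<Rightarrow> nat) \<Rightarrow> nat \<Rightarrow> nat" where
  "Yf q e 0 = 0"
| "Yf q e (Suc K) = q * Yf q e K + e K"

lemma Yf_less: "(\<And>k. k < K \<Longrightarrow> e k < q) \<Longrightarrow> Yf q e K < q ^ K"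
proof (induction K)
  case 0 then show ?case by simp
next
  case (Suc K)
  have "Yf q e K < q ^ K" "e K < q" using Suc by auto
  then have "Yf q e K + 1 \<le> q ^ K" by simp
  then have "q * (Yf q e K + 1) \<le> q * q ^ K" by (intro mult_le_mono2)
  then show ?case using \<open>e K < q\<close> by (simp add: algebra_simps)
qed

lemma Yf_real: "q > 0 \<Longrightarrow> real (Yf q e K) / real q ^ K = (\<Sum>k<K. real (e k) / real q ^ Suc k)"
proof (induction K)
  case 0 then show ?case by simp
next
  case (Suc K)
  have "real (Yf q e (Suc K)) / real q ^ Suc K = real (Yf q e K) / real q ^ K + real (e K) / real q ^ Suc K"
    using Suc.prems by (simp add: field_simps)
  then show ?case using Suc by simp
qed

lemma Yf_split: "d \<le> K \<Longrightarrow> Yf q e K = Yf q e d * q ^ (K - d) + Yf q (\<lambda>k. e (k + d)) (K - d)"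
proof (induction K)
  case 0 then show ?case by simp
next
  case (Suc K)
  show ?case
  proof (cases "d = Suc K")
    case True then show ?thesis by simp
  next
    case False
    then have dK: "d \<le> K" using Suc.prems by simp
    have e: "Suc K - d = Suc (K - d)" using dK by simp
    show ?thesis using Suc.IH[OF dK] dK unfolding e by (simp add: algebra_simps)
  qed
qed

lemma Yf_div: "(\<And>k. k < K \<Longrightarrow> e k < q) \<Longrightarrow> d \<le> K \<Longrightarrow> Yf q e K div q ^ (K - d) = Yf q e d"
proof -
  assume e: "\<And>k. k < K \<Longrightarrow> e k < q" and d: "d \<le> K"
  have "Yf q (\<lambda>k. e (k + d)) (K - d) < q ^ (K - d)" using e by (intro Yf_less) auto
  then show ?thesis unfolding Yf_split[OF d, of q e]
    by (intro div_nat_eqI) (simp_all add: algebra_simps)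
qed

lemma Yf_digit: "(\<And>k. k < d \<Longrightarrow> e k < q) \<Longrightarrow> k < d \<Longrightarrow> Yf q e d div q ^ (d - 1 - k) mod q = e k"
proof (induction d arbitrary: k)
  case 0 then show ?case by simp
next
  case (Suc d)
  have q: "q > 0" using Suc.prems(1)[of 0] by auto
  show ?case
  proof (cases "k = d")
    case True then show ?thesis using Suc.prems by simp
  next
    case False
    then have kd: "k < d" using Suc.prems by simp
    have ex: "Suc d - 1 - k = Suc (d - 1 - k)" using kd by simp
    have "Yf q e (Suc d) div q ^ (Suc d - 1 - k) = (q * Yf q e d + e d) div q div q ^ (d - 1 - k)"
      unfolding ex by (simp add: div_mult2_eq mult.commute)
    also have "(q * Yf q e d + e d) div q = Yf q e d" using q Suc.prems(1)[of d] by simp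
    finally show ?thesis using Suc.IH[OF _ kd] Suc.prems by simp
  qed
qed

lemma Yf_eq_iff:
  assumes e: "\<And>k. k < d \<Longrightarrow> e k < q" and a: "a < q ^ d"
  shows "Yf q e d = a \<longleftrightarrow> (\<forall>k<d. e k = a div q ^ (d - 1 - k) mod q)"
proof
  assume "Yf q e d = a" then show "\<forall>k<d. e k = a div q ^ (d - 1 - k) mod q"
    using Yf_digit[OF e] by auto
next
  assume h: "\<forall>k<d. e k = a div q ^ (d - 1 - k) mod q"
  show "Yf q e d = a"
  proof (rule digits_eq_imp_eq[where q=q and m=d])
    show "Yf q e d < q ^ d" using e by (rule Yf_less)
    show "a < q ^ d" by (rule a)
    fix r assume r: "r < d"
    have k: "d - 1 - (d - 1 - r) = r" using r by simp
    have kk: "d - 1 - r < d" using r by simp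
    have "Yf q e d div q ^ (d - 1 - (d - 1 - r)) mod q = e (d - 1 - r)"
      by (rule Yf_digit[OF e kk])
    then have 1: "Yf q e d div q ^ r mod q = e (d - 1 - r)" using k by simp
    have "e (d - 1 - r) = a div q ^ (d - 1 - (d - 1 - r)) mod q" using h kk by blast
    then have "e (d - 1 - r) = a div q ^ r mod q" using k by simp
    with 1 show "Yf q e d div q ^ r mod q = a div q ^ r mod q" by simp
  qed
qed

lemma box_iff:
  fixes q K d a :: nat and e :: "nat \<Rightarrow> nat"
  assumes q: "q > 0" and e: "\<And>k. k < K \<Longrightarrow> e k < q" and d: "d \<le> K" and a: "a < q ^ d"
  shows "(real a / real q ^ d \<le> real (Yf q e K) / real q ^ K \<and> real (Yf q e K) / real q ^ K < real (a + 1) / real q ^ d)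
     \<longleftrightarrow> (\<forall>k<d. e k = a div q ^ (d - 1 - k) mod q)"
proof -
  define Y where "Y = Yf q e K"
  define Q where "Q = q ^ (K - d)"
  have Q: "Q > 0" using q unfolding Q_def by simp
  have qK: "real q ^ K = real q ^ d * real Q" unfolding Q_def using d
    by (simp add: power_add[symmetric])
  have qd: "real q ^ d > 0" using q by simp
  have "(real a / real q ^ d \<le> real Y / real q ^ K \<and> real Y / real q ^ K < real (a + 1) / real q ^ d)
      \<longleftrightarrow> (real a * real Q \<le> real Y \<and> real Y < real (a + 1) * real Q)"
  proof -
    have c: "real q ^ d * real Q > 0" using qd Q by simp
    have 1: "real a / real q ^ d = real a * real Q / (real q ^ d * real Q)"
      "real (a + 1) / real q ^ d = real (a + 1) * real Q / (real q ^ d * real Q)" using Q by auto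
    have L1: "\<And>x y. (x / (real q ^ d * real Q) \<le> y / (real q ^ d * real Q)) = (x \<le> y)"
      using c by (simp add: divide_le_cancel)
    have L2: "\<And>x y. (x / (real q ^ d * real Q) < y / (real q ^ d * real Q)) = (x < y)"
      using c q Q by (auto simp add: divide_less_cancel dest: order.asym)
    show ?thesis unfolding qK 1 L1 L2 ..
  qed
  also have "\<dots> \<longleftrightarrow> (a * Q \<le> Y \<and> Y < (a + 1) * Q)"
    by (simp only: of_nat_mult[symmetric] of_nat_le_iff of_nat_less_iff)
  also have "\<dots> \<longleftrightarrow> Y div Q = a"
  proof
    assume "a * Q \<le> Y \<and> Y < (a + 1) * Q" then show "Y div Q = a"
      by (intro div_nat_eqI) (simp_all add: algebra_simps)
  next
    assume h: "Y div Q = a"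
    show "a * Q \<le> Y \<and> Y < (a + 1) * Q"
      using div_times_less_eq_dividend[of Y Q] dividend_less_div_times[OF Q, of Y] h
      by (simp add: algebra_simps)
  qed
  also have "Y div Q = Yf q e d" unfolding Y_def Q_def by (rule Yf_div[OF e d])
  also have "Yf q e d = a \<longleftrightarrow> (\<forall>k<d. e k = a div q ^ (d - 1 - k) mod q)"
    using e d a by (intro Yf_eq_iff) auto
  finally show ?thesis unfolding Y_def .
qed

definition aligned :: "nat \<Rightarrow> (nat \<Rightarrow> nat) \<Rightarrow> nat \<Rightarrow> nat \<Rightarrow> bool" where
  "aligned q \<alpha> p j \<longleftrightarrow> q ^ j dvd (p + Lf q \<alpha> j)"

lemma Lf_split: "l \<le> j \<Longrightarrow> \<exists>X. Lf q \<alpha> j = Lf q \<alpha> l + q ^ l * X"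
proof (induction j)
  case 0 then show ?case by simp
next
  case (Suc j)
  show ?case
  proof (cases "l = Suc j")
    case True then show ?thesis by (intro exI[of _ 0]) simp
  next
    case False
    then have "l \<le> j" using Suc.prems by simp
    then obtain X where X: "Lf q \<alpha> j = Lf q \<alpha> l + q ^ l * X" using Suc.IH by blast
    have "q ^ j = q ^ l * q ^ (j - l)" using \<open>l \<le> j\<close> by (simp add: power_add[symmetric])
    then have "Lf q \<alpha> (Suc j) = Lf q \<alpha> l + q ^ l * (X + \<alpha> j * q ^ (j - l))"
      using X by (simp add: Lf_def algebra_simps)
    then show ?thesis by blast
  qed
qed

lemma aligned_mono: "aligned q \<alpha> p j \<Longrightarrow> l \<le> j \<Longrightarrow> aligned q \<alpha> p l"
proof -
  assume a: "aligned q \<alpha> p j" and l: "l \<le> j"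
  obtain X where X: "Lf q \<alpha> j = Lf q \<alpha> l + q ^ l * X" using Lf_split[OF l] by blast
  have "q ^ l dvd q ^ j" using l by (rule le_imp_power_dvd)
  then have "q ^ l dvd p + Lf q \<alpha> j" using a unfolding aligned_def by (rule dvd_trans)
  then have "q ^ l dvd (p + Lf q \<alpha> l) + q ^ l * X" using X by (simp add: add.assoc)
  then show ?thesis unfolding aligned_def by (simp add: dvd_add_left_iff)
qed

lemma aligned_0: "aligned q \<alpha> p 0" unfolding aligned_def by simp

lemma aligned_step: "aligned q \<alpha> p j \<Longrightarrow> aligned q \<alpha> (p + c * q ^ j) j"
proof -
  assume h: "aligned q \<alpha> p j"
  have e: "p + c * q ^ j + Lf q \<alpha> j = (p + Lf q \<alpha> j) + c * q ^ j" by simp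
  show ?thesis using h unfolding aligned_def e by (rule dvd_add) simp
qed

lemma digit_mod: fixes N q r :: nat shows "q > 0 \<Longrightarrow> N div q ^ r mod q = N mod q ^ Suc r div q ^ r"
proof -
  assume q: "q > 0"
  have "N mod (q ^ r * q) = q ^ r * (N div q ^ r mod q) + N mod q ^ r" by (rule mod_mult2_eq)
  then show ?thesis using q by (simp add: mult.commute)
qed

lemma pad_Lf: "padic_add_digit q n \<alpha> r = (n + Lf q \<alpha> (Suc r)) div q ^ r mod q"
  unfolding padic_add_digit_def Lf_def lessThan_Suc_atMost by (rule refl)

lemma pad_low:
  assumes q: "q > 0" and a: "aligned q \<alpha> p j" and r: "r < j"
  shows "padic_add_digit q (p + i) \<alpha> r = i div q ^ r mod q"
proof -
  have "aligned q \<alpha> p (Suc r)" using r by (intro aligned_mono[OF a]) auto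
  then obtain M where M: "p + Lf q \<alpha> (Suc r) = q ^ Suc r * M" unfolding aligned_def by blast
  have M': "p + i + Lf q \<alpha> (Suc r) = q ^ Suc r * M + i" using M by linarith
  have "padic_add_digit q (p + i) \<alpha> r = (q ^ Suc r * M + i) div q ^ r mod q"
    unfolding pad_Lf M' ..
  also have "\<dots> = (q ^ Suc r * M + i) mod q ^ Suc r div q ^ r" by (rule digit_mod[OF q])
  also have "\<dots> = i mod q ^ Suc r div q ^ r" by simp
  also have "\<dots> = i div q ^ r mod q" by (rule digit_mod[OF q, symmetric])
  finally show ?thesis .
qed

lemma pad_high:
  assumes q: "q > 0" and a: "aligned q \<alpha> p j" and r: "j \<le> r" and i: "i < q ^ j"
  shows "padic_add_digit q (p + i) \<alpha> r = padic_add_digit q p \<alpha> r"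
proof -
  obtain X where X: "Lf q \<alpha> (Suc r) = Lf q \<alpha> j + q ^ j * X" using Lf_split[of j "Suc r"] r by auto
  obtain M where M: "p + Lf q \<alpha> j = q ^ j * M" using a unfolding aligned_def by blast
  have e: "p + Lf q \<alpha> (Suc r) = q ^ j * (M + X)" using X M by (simp add: algebra_simps)
  have qr: "q ^ r = q ^ j * q ^ (r - j)" using r by (simp add: power_add[symmetric])
  have gen: "(p + i' + Lf q \<alpha> (Suc r)) div q ^ r = (M + X) div q ^ (r - j)" if i': "i' < q ^ j" for i'
  proof -
    have "(q ^ j * (M + X) + i') div q ^ r = (q ^ j * (M + X) + i') div q ^ j div q ^ (r - j)"
      unfolding qr by (simp add: div_mult2_eq)
    also have "(q ^ j * (M + X) + i') div q ^ j = M + X" using i' q by simp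
    finally show ?thesis using e by (simp add: algebra_simps)
  qed
  have 1: "(p + i + Lf q \<alpha> (Suc r)) div q ^ r = (M + X) div q ^ (r - j)" using gen[OF i] .
  have 2: "(p + Lf q \<alpha> (Suc r)) div q ^ r = (M + X) div q ^ (r - j)"
    using gen[of 0] q by simp
  show ?thesis unfolding pad_Lf using 1 2 by simp
qed

lemma concat_map_eq_iff:
  assumes "\<And>x. x \<in> set xs \<Longrightarrow> length (f x) = length (g x)"
  shows "concat (map f xs) = concat (map g xs) \<longleftrightarrow> (\<forall>x\<in>set xs. f x = g x)"
  using assms
proof (induction xs)
  case Nil then show ?case by simp
next
  case (Cons a xs)
  have "length (f a) = length (g a)" using Cons.prems by simp
  then show ?case using Cons by (simp add: append_eq_append_conv)
qed

lemma matvec_rows: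
  assumes rs: "set rs \<subseteq> carrier_vec m"
  shows "mat_of_rows m rs *\<^sub>v w = vec_of_list (map (\<lambda>R. R \<bullet> w) rs)"
proof (rule eq_vecI)
  show "dim_vec (mat_of_rows m rs *\<^sub>v w) = dim_vec (vec_of_list (map (\<lambda>R. R \<bullet> w) rs))" by simp
  fix k assume k: "k < dim_vec (vec_of_list (map (\<lambda>R. R \<bullet> w) rs))"
  then have k': "k < length rs" by simp
  have rk: "rs ! k \<in> carrier_vec m" using rs k' nth_mem by blast
  have 1: "(mat_of_rows m rs *\<^sub>v w) $ k = row (mat_of_rows m rs) k \<bullet> w"
    by (rule index_mult_mat_vec) (use k' in simp)
  have 2: "row (mat_of_rows m rs) k = rs ! k" using k' rk by (rule mat_of_rows_row)
  have 3: "vec_of_list (map (\<lambda>R. R \<bullet> w) rs) $ k = map (\<lambda>R. R \<bullet> w) rs ! k" by (rule vec_of_list_index)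
  show "(mat_of_rows m rs *\<^sub>v w) $ k = vec_of_list (map (\<lambda>R. R \<bullet> w) rs) $ k"
    unfolding 1 2 3 using k' by (simp only: nth_map)
qed

lemma vec_of_list_eq_iff: "vec_of_list xs = vec_of_list ys \<longleftrightarrow> xs = ys"
  by (metis list_vec)

definition Phi :: "nat \<Rightarrow> (nat \<Rightarrow> nat \<Rightarrow> 'f) \<Rightarrow> nat \<Rightarrow> nat \<Rightarrow> 'f vec" where
  "Phi q \<psi> m n = vec m (\<lambda>r. \<psi> r (n div q ^ r mod q))"

lemma Phi_bij:
  assumes q: "q > 0" and psi: "\<And>r. bij_betw (\<psi> r) {..<q} UNIV"
  shows "bij_betw (Phi q \<psi> m) {..<q ^ m} (carrier_vec m)"
proof (rule bij_betw_imageI)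
  show "inj_on (Phi q \<psi> m) {..<q ^ m}"
  proof (rule inj_onI)
    fix n n' assume n: "n \<in> {..<q ^ m}" and n': "n' \<in> {..<q ^ m}" and e: "Phi q \<psi> m n = Phi q \<psi> m n'"
    show "n = n'"
    proof (rule digits_eq_imp_eq[where q = q and m = m])
      show "n < q ^ m" "n' < q ^ m" using n n' by auto
      fix r assume r: "r < m"
      have "Phi q \<psi> m n $ r = Phi q \<psi> m n' $ r" using e by simp
      then have e1: "\<psi> r (n div q ^ r mod q) = \<psi> r (n' div q ^ r mod q)" unfolding Phi_def using r by simp
      have inj: "inj_on (\<psi> r) {..<q}" using psi[of r] unfolding bij_betw_def by (rule conjunct1)
      show "n div q ^ r mod q = n' div q ^ r mod q"
        by (rule inj_onD[OF inj e1]) (simp_all add: q)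
    qed
  qed
  show "Phi q \<psi> m ` {..<q ^ m} = carrier_vec m"
  proof (rule equalityI)
    show "Phi q \<psi> m ` {..<q ^ m} \<subseteq> carrier_vec m" unfolding Phi_def by auto
    show "carrier_vec m \<subseteq> Phi q \<psi> m ` {..<q ^ m}"
    proof (rule subsetI)
      fix w :: "'a vec" assume w: "w \<in> carrier_vec m"
      define c where "c r = inv_into {..<q} (\<psi> r) (w $ r)" for r
      have im: "\<psi> r ` {..<q} = UNIV" for r using psi[of r] unfolding bij_betw_def by (rule conjunct2)
      have c: "c r < q" for r unfolding c_def using inv_into_into[of "w $ r" "\<psi> r" "{..<q}"] im by auto
      have pc: "\<psi> r (c r) = w $ r" for r unfolding c_def using f_inv_into_f[of "w $ r" "\<psi> r" "{..<q}"] im by auto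
      have "Phi q \<psi> m (Lf q c m) = w"
      proof (rule eq_vecI)
        show "dim_vec (Phi q \<psi> m (Lf q c m)) = dim_vec w" using w unfolding Phi_def by simp
        fix r assume r: "r < dim_vec w"
        then have r': "r < m" using w by simp
        have "Lf q c m div q ^ r mod q = c r" using c r' by (intro Lf_digit) auto
        then show "Phi q \<psi> m (Lf q c m) $ r = w $ r" unfolding Phi_def using r' pc by simp
      qed
      moreover have "Lf q c m < q ^ m" using c by (intro Lf_less)
      ultimately show "w \<in> Phi q \<psi> m ` {..<q ^ m}" by force
    qed
  qed
qed

lemma card_transfer:
  assumes "bij_betw f A B"
  shows "card {x \<in> A. P (f x)} = card {y \<in> B. P y}"
proof -
  have inj: "inj_on f A" and im: "f ` A = B" using assms unfolding bij_betw_def by auto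
  have "bij_betw f {x \<in> A. P (f x)} {y \<in> B. P y}"
  proof (rule bij_betw_imageI)
    show "inj_on f {x \<in> A. P (f x)}" by (rule inj_on_subset[OF inj]) blast
    show "f ` {x \<in> A. P (f x)} = {y \<in> B. P y}"
    proof
      show "f ` {x \<in> A. P (f x)} \<subseteq> {y \<in> B. P y}" using im by auto
      show "{y \<in> B. P y} \<subseteq> f ` {x \<in> A. P (f x)}"
      proof
        fix y assume y: "y \<in> {y \<in> B. P y}"
        then obtain x where x: "x \<in> A" "y = f x" using im by auto
        then show "y \<in> f ` {x \<in> A. P (f x)}" using y by auto
      qed
    qed
  qed
  then show ?thesis by (rule bij_betw_same_card)
qed

locale alg_setting =
  fixes s :: nat and T :: "nat \<Rightarrow> nat" and C :: "nat \<Rightarrow> nat \<Rightarrow> nat \<Rightarrow> 'f::{field,finite}"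
    and \<psi> :: "nat \<Rightarrow> nat \<Rightarrow> 'f" and lam :: "nat \<Rightarrow> nat \<Rightarrow> 'f \<Rightarrow> nat" and \<alpha> :: "nat \<Rightarrow> nat"
  assumes T_le: "\<And>m. T m \<le> m"
    and finite_row: "\<And>i j. i \<in> {1..s} \<Longrightarrow> 1 \<le> j \<Longrightarrow> finite {r. C i j r \<noteq> 0}"
    and rank_cond: "\<And>m d. T m < m \<Longrightarrow> 1 \<le> (\<Sum>i=1..s. d i) \<Longrightarrow> (\<Sum>i=1..s. d i) \<le> m - T m \<Longrightarrow>
         vec_space.rank (\<Sum>i=1..s. d i) (gen_submatrix s C d m) = (\<Sum>i=1..s. d i)"
    and \<alpha>_digits: "\<And>k. \<alpha> k < (card (UNIV :: 'f set))"
    and \<psi>_bij: "\<And>r. bij_betw (\<psi> r) {..<(card (UNIV :: 'f set))} UNIV"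
    and lam_bij: "\<And>i j. i \<in> {1..s} \<Longrightarrow> 1 \<le> j \<Longrightarrow> bij_betw (lam i j) UNIV {..<(card (UNIV :: 'f set))}"
begin


definition dig :: "nat \<Rightarrow> nat \<Rightarrow> nat \<Rightarrow> nat" where
  "dig i jj n = lam i jj (\<Sum>r\<in>{r. C i jj r \<noteq> 0}. C i jj r * \<psi> r (padic_add_digit (card (UNIV :: 'f set)) n \<alpha> r))"

definition tr :: "nat \<Rightarrow> nat \<Rightarrow> nat \<Rightarrow> real" where
  "tr K n i = real (Yf (card (UNIV :: 'f set)) (\<lambda>k. dig i (Suc k) n) K) / real (card (UNIV :: 'f set)) ^ K"

definition cc :: "nat \<Rightarrow> nat \<Rightarrow> nat \<Rightarrow> nat \<Rightarrow> 'f" where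
  "cc p m i jj = (\<Sum>r\<in>{r. C i jj r \<noteq> 0 \<and> m \<le> r}. C i jj r * \<psi> r (padic_add_digit (card (UNIV :: 'f set)) p \<alpha> r))"

lemma q_ge2: "(card (UNIV :: 'f set)) \<ge> 2"
proof -
  have "card {0::'f, 1} = 2" by simp
  moreover have "card {0::'f, 1} \<le> (card (UNIV :: 'f set))" by (rule card_mono) auto
  ultimately show ?thesis by simp
qed

lemma q_pos: "(card (UNIV :: 'f set)) > 0" using q_ge2 by simp

lemma dig_less: "i \<in> {1..s} \<Longrightarrow> 1 \<le> jj \<Longrightarrow> dig i jj n < (card (UNIV :: 'f set))"
  unfolding dig_def using bij_betw_apply[OF lam_bij] by blast

lemma tr_bounds: "i \<in> {1..s} \<Longrightarrow> 0 \<le> tr K n i \<and> tr K n i < 1"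
proof -
  assume i: "i \<in> {1..s}"
  have "Yf (card (UNIV :: 'f set)) (\<lambda>k. dig i (Suc k) n) K < (card (UNIV :: 'f set)) ^ K" using dig_less[OF i] by (intro Yf_less) auto
  then have "real (Yf (card (UNIV :: 'f set)) (\<lambda>k. dig i (Suc k) n) K) < real (card (UNIV :: 'f set)) ^ K" by (metis of_nat_less_iff of_nat_power)
  then show ?thesis unfolding tr_def using q_pos by simp
qed

lemma dig_block:
  assumes a: "aligned (card (UNIV :: 'f set)) \<alpha> p m" and n: "n < (card (UNIV :: 'f set)) ^ m" and i: "i \<in> {1..s}" and jj: "1 \<le> jj"
  shows "dig i jj (p + n) = lam i jj (vec m (C i jj) \<bullet> Phi (card (UNIV :: 'f set)) \<psi> m n + cc p m i jj)"
proof -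
  define S where "S = {r. C i jj r \<noteq> 0}"
  have fS: "finite S" unfolding S_def using finite_row[OF i jj] .
  define g where "g r = C i jj r * \<psi> r (padic_add_digit (card (UNIV :: 'f set)) (p + n) \<alpha> r)" for r
  have "sum g S = sum g (S \<inter> {..<m}) + sum g (S - {..<m})" by (rule sum.Int_Diff[OF fS])
  moreover have "sum g (S - {..<m}) = cc p m i jj"
  proof -
    have "S - {..<m} = {r. C i jj r \<noteq> 0 \<and> m \<le> r}" unfolding S_def by auto
    moreover have "g r = C i jj r * \<psi> r (padic_add_digit (card (UNIV :: 'f set)) p \<alpha> r)" if "m \<le> r" for r
      unfolding g_def using pad_high[OF q_pos a that n] by simp
    ultimately show ?thesis unfolding cc_def by (intro sum.cong) auto
  qed
  moreover have "sum g (S \<inter> {..<m}) = vec m (C i jj) \<bullet> Phi (card (UNIV :: 'f set)) \<psi> m n"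
  proof -
    have "sum g (S \<inter> {..<m}) = sum g {..<m}"
      by (rule sum.mono_neutral_left) (auto simp: S_def g_def)
    also have "\<dots> = (\<Sum>r<m. C i jj r * \<psi> r (n div (card (UNIV :: 'f set)) ^ r mod (card (UNIV :: 'f set))))"
      unfolding g_def using pad_low[OF q_pos a] by (intro sum.cong) auto
    also have "\<dots> = vec m (C i jj) \<bullet> Phi (card (UNIV :: 'f set)) \<psi> m n"
      unfolding scalar_prod_def Phi_def by (simp add: atLeast0LessThan)
    finally show ?thesis .
  qed
  ultimately have "sum g S = vec m (C i jj) \<bullet> Phi (card (UNIV :: 'f set)) \<psi> m n + cc p m i jj" by simp
  then show ?thesis unfolding dig_def S_def g_def by simp
qed


lemma lam_eq_iff:
  assumes i: "i \<in> {1..s}" and jj: "1 \<le> jj" and y: "y < (card (UNIV :: 'f set))"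
  shows "lam i jj x = y \<longleftrightarrow> x = inv_into UNIV (lam i jj) y"
proof -
  have b: "bij_betw (lam i jj) UNIV {..<(card (UNIV :: 'f set))}" by (rule lam_bij[OF i jj])
  have inj: "inj (lam i jj)" using b unfolding bij_betw_def by (rule conjunct1)
  have im: "range (lam i jj) = {..<(card (UNIV :: 'f set))}" using b unfolding bij_betw_def by (rule conjunct2)
  have yr: "y \<in> range (lam i jj)" using im y by simp
  show ?thesis
  proof
    assume "lam i jj x = y" then show "x = inv_into UNIV (lam i jj) y" using inv_into_f_f[OF inj] by auto
  next
    assume "x = inv_into UNIV (lam i jj) y" then show "lam i jj x = y" using f_inv_into_f[OF yr] by simp
  qed
qed

lemma length_rows: "length (concat (map (\<lambda>i. map (f i) [1..<d i + 1]) [1..<s + 1])) = (\<Sum>i=1..s. d i)"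
proof -
  have "map (\<lambda>i. length (map (f i) [1..<d i + 1])) [1..<s + 1] = map d [1..<s + 1]"
    by (simp only: length_map length_upt diff_add_inverse2)
  then have "length (concat (map (\<lambda>i. map (f i) [1..<d i + 1]) [1..<s + 1])) = sum_list (map d [1..<s + 1])"
    by (simp only: length_concat map_map comp_def)
  also have "\<dots> = sum d {1..<s + 1}" by (simp only: sum_set_upt_conv_sum_list_nat[symmetric] set_upt)
  also have "{1..<s + 1} = {1..s}" by auto
  finally show ?thesis .
qed

lemma count_block:
  assumes a: "aligned (card (UNIV :: 'f set)) \<alpha> p m" and K: "m \<le> K"
    and dsum: "(\<Sum>i=1..s. d i) = m - T m" and d1: "1 \<le> (\<Sum>i=1..s. d i)"
    and aa: "\<forall>i\<in>{1..s}. aa i < (card (UNIV :: 'f set)) ^ d i"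
  shows "card {n. n < (card (UNIV :: 'f set)) ^ m \<and> (\<forall>i\<in>{1..s}. real (aa i) / real (card (UNIV :: 'f set)) ^ d i \<le> tr K (p + n) i
            \<and> tr K (p + n) i < real (aa i + 1) / real (card (UNIV :: 'f set)) ^ d i)} = (card (UNIV :: 'f set)) ^ T m"
proof -
  define D where "D = (\<Sum>i=1..s. d i)"
  define dg where "dg i k = aa i div (card (UNIV :: 'f set)) ^ (d i - 1 - k) mod (card (UNIV :: 'f set))" for i k
  define \<tau> where "\<tau> i jj = inv_into UNIV (lam i jj) (dg i (jj - 1)) - cc p m i jj" for i jj
  define rs where "rs = concat (map (\<lambda>i. map (\<lambda>j. vec m (C i j)) [1..<d i + 1]) [1..<s + 1])"
  define ts where "ts = concat (map (\<lambda>i. map (\<lambda>j. \<tau> i j) [1..<d i + 1]) [1..<s + 1])"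
  define M where "M = gen_submatrix s C d m"
  have M: "M = mat_of_rows m rs" unfolding M_def gen_submatrix_def rs_def ..
  have lrs: "length rs = D" unfolding rs_def D_def by (rule length_rows)
  have lts: "length ts = D" unfolding ts_def D_def by (rule length_rows)
  have rs_car: "set rs \<subseteq> carrier_vec m" unfolding rs_def by auto
  have Tm: "T m < m" using dsum d1 by simp
  have di: "d i \<le> K" if "i \<in> {1..s}" for i
  proof -
    have "d i \<le> (\<Sum>i=1..s. d i)" by (rule member_le_sum) (use that in auto)
    then show ?thesis using dsum K by simp
  qed
  have step1: "(\<forall>i\<in>{1..s}. real (aa i) / real (card (UNIV :: 'f set)) ^ d i \<le> tr K (p + n) i
            \<and> tr K (p + n) i < real (aa i + 1) / real (card (UNIV :: 'f set)) ^ d i)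
       \<longleftrightarrow> (\<forall>i\<in>{1..s}. \<forall>k<d i. dig i (Suc k) (p + n) = dg i k)" for n
    unfolding tr_def dg_def
    using box_iff[OF q_pos _ di aa[rule_format]] dig_less by simp
  have step2: "(\<forall>i\<in>{1..s}. \<forall>k<d i. dig i (Suc k) (p + n) = dg i k)
       \<longleftrightarrow> (\<forall>i\<in>{1..s}. \<forall>j\<in>set [1..<d i + 1]. vec m (C i j) \<bullet> Phi (card (UNIV :: 'f set)) \<psi> m n = \<tau> i j)"
    if n: "n < (card (UNIV :: 'f set)) ^ m" for n
  proof -
    have A: "dig i (Suc k) (p + n) = dg i k \<longleftrightarrow> vec m (C i (Suc k)) \<bullet> Phi (card (UNIV :: 'f set)) \<psi> m n = \<tau> i (Suc k)"
      if i: "i \<in> {1..s}" for i k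
    proof -
      have dq: "dg i k < (card (UNIV :: 'f set))" unfolding dg_def using q_pos by simp
      have "dig i (Suc k) (p + n) = dg i k \<longleftrightarrow>
          vec m (C i (Suc k)) \<bullet> Phi (card (UNIV :: 'f set)) \<psi> m n + cc p m i (Suc k) = inv_into UNIV (lam i (Suc k)) (dg i k)"
      proof -
        have db: "dig i (Suc k) (p + n) = lam i (Suc k) (vec m (C i (Suc k)) \<bullet> Phi (card (UNIV :: 'f set)) \<psi> m n + cc p m i (Suc k))"
          by (rule dig_block[OF a n i]) simp
        show ?thesis unfolding db by (rule lam_eq_iff[OF i _ dq]) simp
      qed
      also have "\<dots> \<longleftrightarrow> vec m (C i (Suc k)) \<bullet> Phi (card (UNIV :: 'f set)) \<psi> m n = \<tau> i (Suc k)"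
        unfolding \<tau>_def by (simp add: eq_diff_eq)
      finally show ?thesis .
    qed
    have B: "(\<forall>k<d i. P (Suc k)) \<longleftrightarrow> (\<forall>j\<in>set [1..<d i + 1]. P j)" for i and P :: "nat \<Rightarrow> bool"
    proof -
      have "(\<forall>k<d i. P (Suc k)) \<longleftrightarrow> (\<forall>j\<in>{1..<d i + 1}. P j)"
      proof
        assume h: "\<forall>k<d i. P (Suc k)"
        show "\<forall>j\<in>{1..<d i + 1}. P j"
        proof
          fix j assume j: "j \<in> {1..<d i + 1}"
          then have "j = Suc (j - 1)" "j - 1 < d i" by auto
          then show "P j" using h by metis
        qed
      next
        assume h: "\<forall>j\<in>{1..<d i + 1}. P j"
        show "\<forall>k<d i. P (Suc k)" using h by auto
      qed
      then show ?thesis by (simp only: set_upt)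
    qed
    have "(\<forall>i\<in>{1..s}. \<forall>k<d i. dig i (Suc k) (p + n) = dg i k)
        \<longleftrightarrow> (\<forall>i\<in>{1..s}. \<forall>k<d i. vec m (C i (Suc k)) \<bullet> Phi (card (UNIV :: 'f set)) \<psi> m n = \<tau> i (Suc k))"
    proof (rule ball_cong[OF refl])
      fix i assume i: "i \<in> {1..s}"
      show "(\<forall>k<d i. dig i (Suc k) (p + n) = dg i k) = (\<forall>k<d i. vec m (C i (Suc k)) \<bullet> Phi (card (UNIV :: 'f set)) \<psi> m n = \<tau> i (Suc k))"
        using A[OF i] by simp
    qed
    also have "\<dots> \<longleftrightarrow> (\<forall>i\<in>{1..s}. \<forall>j\<in>set [1..<d i + 1]. vec m (C i j) \<bullet> Phi (card (UNIV :: 'f set)) \<psi> m n = \<tau> i j)"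
    proof (rule ball_cong[OF refl])
      fix i assume i: "i \<in> {1..s}"
      show "(\<forall>k<d i. vec m (C i (Suc k)) \<bullet> Phi (card (UNIV :: 'f set)) \<psi> m n = \<tau> i (Suc k))
         = (\<forall>j\<in>set [1..<d i + 1]. vec m (C i j) \<bullet> Phi (card (UNIV :: 'f set)) \<psi> m n = \<tau> i j)"
        by (rule B[where P = "\<lambda>j. vec m (C i j) \<bullet> Phi (card (UNIV :: 'f set)) \<psi> m n = \<tau> i j"])
    qed
    finally show ?thesis .
  qed
  have step3: "(\<forall>i\<in>{1..s}. \<forall>j\<in>set [1..<d i + 1]. vec m (C i j) \<bullet> w = \<tau> i j)
       \<longleftrightarrow> M *\<^sub>v w = vec_of_list ts" for w
  proof -
    have "M *\<^sub>v w = vec_of_list ts \<longleftrightarrow> map (\<lambda>R. R \<bullet> w) rs = ts"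
      unfolding M matvec_rows[OF rs_car] vec_of_list_eq_iff ..
    also have "\<dots> \<longleftrightarrow> (\<forall>i\<in>set [1..<s + 1]. map (\<lambda>j. vec m (C i j) \<bullet> w) [1..<d i + 1] = map (\<lambda>j. \<tau> i j) [1..<d i + 1])"
      unfolding rs_def ts_def map_concat map_map comp_def
      by (rule concat_map_eq_iff) simp
    also have "\<dots> \<longleftrightarrow> (\<forall>i\<in>{1..s}. \<forall>j\<in>set [1..<d i + 1]. vec m (C i j) \<bullet> w = \<tau> i j)"
    proof -
      have eqs: "{1..<s + 1} = {1..s}" by auto
      show ?thesis unfolding map_eq_conv set_upt eqs by (rule refl)
    qed
    finally show ?thesis by (rule sym)
  qed
  have "{n. n < (card (UNIV :: 'f set)) ^ m \<and> (\<forall>i\<in>{1..s}. real (aa i) / real (card (UNIV :: 'f set)) ^ d i \<le> tr K (p + n) i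
            \<and> tr K (p + n) i < real (aa i + 1) / real (card (UNIV :: 'f set)) ^ d i)}
      = {n \<in> {..<(card (UNIV :: 'f set)) ^ m}. M *\<^sub>v Phi (card (UNIV :: 'f set)) \<psi> m n = vec_of_list ts}"
  proof (rule Collect_cong)
    fix n
    show "(n < (card (UNIV :: 'f set)) ^ m \<and> (\<forall>i\<in>{1..s}. real (aa i) / real (card (UNIV :: 'f set)) ^ d i \<le> tr K (p + n) i
            \<and> tr K (p + n) i < real (aa i + 1) / real (card (UNIV :: 'f set)) ^ d i))
      = (n \<in> {..<(card (UNIV :: 'f set)) ^ m} \<and> M *\<^sub>v Phi (card (UNIV :: 'f set)) \<psi> m n = vec_of_list ts)"
    proof (cases "n < (card (UNIV :: 'f set)) ^ m")
      case True
      show ?thesis unfolding step1 step2[OF True] step3 using True by simp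
    next
      case False
      then show ?thesis by simp
    qed
  qed
  then have "card {n. n < (card (UNIV :: 'f set)) ^ m \<and> (\<forall>i\<in>{1..s}. real (aa i) / real (card (UNIV :: 'f set)) ^ d i \<le> tr K (p + n) i
            \<and> tr K (p + n) i < real (aa i + 1) / real (card (UNIV :: 'f set)) ^ d i)}
      = card {w \<in> carrier_vec m. M *\<^sub>v w = vec_of_list ts}"
    using card_transfer[OF Phi_bij[OF q_pos \<psi>_bij]] by simp
  moreover have "card {w \<in> carrier_vec m. M *\<^sub>v w = vec_of_list ts} * (card (UNIV :: 'f set)) ^ D = (card (UNIV :: 'f set)) ^ m"
  proof (rule fiber_card)
    show "M \<in> carrier_mat D m" unfolding M using lrs by (metis mat_of_rows_carrier(1))
    show "vec_space.rank D M = D" unfolding M_def D_def by (rule rank_cond[OF Tm d1]) (use dsum in \<open>simp only: order_refl\<close>)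
    show "vec_of_list ts \<in> carrier_vec D" using lts by (metis carrier_vecI dim_vec_of_list)
  qed
  moreover have "(card (UNIV :: 'f set)) ^ m = (card (UNIV :: 'f set)) ^ T m * (card (UNIV :: 'f set)) ^ D" unfolding D_def dsum using T_le[of m]
    by (simp add: power_add[symmetric])
  ultimately show ?thesis using q_pos by simp
qed

lemma net_block:
  assumes a: "aligned (card (UNIV :: 'f set)) \<alpha> p m" and K: "m \<le> K"
  shows "is_net (card (UNIV :: 'f set)) (T m) m s (\<lambda>n i. tr K (p + n) i)"
proof -
  have 1: "T m \<le> m" by (rule T_le)
  have 2: "\<forall>n<(card (UNIV :: 'f set)) ^ m. \<forall>i\<in>{1..s}. 0 \<le> tr K (p + n) i \<and> tr K (p + n) i < 1" using tr_bounds by blast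
  have 3: "\<forall>(d :: nat \<Rightarrow> nat) (aa :: nat \<Rightarrow> nat).
        (\<forall>i\<in>{1..s}. aa i < (card (UNIV :: 'f set)) ^ d i) \<and> (\<Sum>i=1..s. d i) = m - T m \<longrightarrow>
        card {n. n < (card (UNIV :: 'f set)) ^ m \<and> (\<forall>i\<in>{1..s}.
               real (aa i) / real (card (UNIV :: 'f set)) ^ d i \<le> tr K (p + n) i \<and> tr K (p + n) i < real (aa i + 1) / real (card (UNIV :: 'f set)) ^ d i)}
          = (card (UNIV :: 'f set)) ^ T m"
  proof (intro allI impI)
    fix d aa :: "nat \<Rightarrow> nat"
    assume h: "(\<forall>i\<in>{1..s}. aa i < (card (UNIV :: 'f set)) ^ d i) \<and> (\<Sum>i = 1..s. d i) = m - T m"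
    show "card {n. n < (card (UNIV :: 'f set)) ^ m \<and> (\<forall>i\<in>{1..s}. real (aa i) / real (card (UNIV :: 'f set)) ^ d i \<le> tr K (p + n) i
              \<and> tr K (p + n) i < real (aa i + 1) / real (card (UNIV :: 'f set)) ^ d i)} = (card (UNIV :: 'f set)) ^ T m"
    proof (cases "(\<Sum>i = 1..s. d i) = 0")
      case True
      then have d0: "\<forall>i\<in>{1..s}. d i = 0" by simp
      then have a0: "\<forall>i\<in>{1..s}. aa i = 0" using h by auto
      have Tm: "T m = m" using True h T_le[of m] by simp
      have "{n. n < (card (UNIV :: 'f set)) ^ m \<and> (\<forall>i\<in>{1..s}. real (aa i) / real (card (UNIV :: 'f set)) ^ d i \<le> tr K (p + n) i
              \<and> tr K (p + n) i < real (aa i + 1) / real (card (UNIV :: 'f set)) ^ d i)} = {..<(card (UNIV :: 'f set)) ^ m}"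
        using d0 a0 tr_bounds by auto
      then show ?thesis using Tm by simp
    next
      case False
      show ?thesis by (rule count_block[OF a K]) (use h False in auto)
    qed
  qed
  show ?thesis unfolding is_net_def by (rule conjI[OF 1 conjI[OF 2 3]])
qed

end

lemma star_disc_ge:
  fixes x :: "nat \<Rightarrow> nat \<Rightarrow> real" and u :: "nat \<Rightarrow> real"
  assumes u: "\<forall>i\<in>{1..s}. 0 \<le> u i \<and> u i \<le> 1"
  shows "\<bar>real (card {n. n < N \<and> (\<forall>i\<in>{1..s}. 0 \<le> x n i \<and> x n i < u i)}) / real N - (\<Prod>i=1..s. u i)\<bar>
         \<le> star_disc s N x"
  unfolding star_disc_def
proof (rule cSUP_upper)
  show "u \<in> {u. \<forall>i\<in>{1..s}. 0 \<le> u i \<and> u i \<le> 1}" using u by simp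
  show "bdd_above ((\<lambda>u. \<bar>real (card {n. n < N \<and> (\<forall>i\<in>{1..s}. 0 \<le> x n i \<and> x n i < u i)}) / real N - (\<Prod>i=1..s. u i)\<bar>)
      ` {u. \<forall>i\<in>{1..s}. 0 \<le> u i \<and> u i \<le> 1})"
  proof (rule bdd_aboveI2)
    fix v :: "nat \<Rightarrow> real" assume v: "v \<in> {u. \<forall>i\<in>{1..s}. 0 \<le> u i \<and> u i \<le> 1}"
    define A where "A = card {n. n < N \<and> (\<forall>i\<in>{1..s}. 0 \<le> x n i \<and> x n i < v i)}"
    have "A \<le> card {..<N}" unfolding A_def by (rule card_mono) auto
    then have A: "A \<le> N" by simp
    have a1: "0 \<le> real A / real N" "real A / real N \<le> 1"
      using A by (auto simp: divide_le_eq_1)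
    have p1: "0 \<le> (\<Prod>i=1..s. v i)" "(\<Prod>i=1..s. v i) \<le> 1"
      using v by (auto intro: prod_nonneg prod_le_1)
    show "\<bar>real A / real N - (\<Prod>i=1..s. v i)\<bar> \<le> 1" using a1 p1 by linarith
  qed
qed

lemma star_disc_nonneg:
  fixes x :: "nat \<Rightarrow> nat \<Rightarrow> real"
  shows "0 \<le> star_disc s N x"
proof -
  have "0 \<le> \<bar>real (card {n. n < N \<and> (\<forall>i\<in>{1..s}. 0 \<le> x n i \<and> x n i < 0)}) / real N - (\<Prod>i=1..s. (0::real))\<bar>"
    by simp
  also have "\<dots> \<le> star_disc s N x" by (rule star_disc_ge[where u = "\<lambda>_. 0"]) simp
  finally show ?thesis .
qed

context alg_setting
begin

definition box :: "(nat \<Rightarrow> real) \<Rightarrow> (nat \<Rightarrow> real) \<Rightarrow> bool" where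
  "box u z \<longleftrightarrow> (\<forall>i\<in>{1..s}. 0 \<le> z i \<and> z i < u i)"

definition vol :: "(nat \<Rightarrow> real) \<Rightarrow> real" where
  "vol u = (\<Prod>i=1..s. u i)"

definition E :: "nat \<Rightarrow> nat \<Rightarrow> nat \<Rightarrow> (nat \<Rightarrow> real) \<Rightarrow> real" where
  "E K a b u = real (card {n. a \<le> n \<and> n < b \<and> box u (tr K n)}) - real (b - a) * vol u"

lemma E_split:
  assumes ab: "a \<le> b" and bc: "b \<le> c"
  shows "E K a c u = E K a b u + E K b c u"
proof -
  have eq: "{n. a \<le> n \<and> n < c \<and> box u (tr K n)} = {n. a \<le> n \<and> n < b \<and> box u (tr K n)} \<union> {n. b \<le> n \<and> n < c \<and> box u (tr K n)}"
    using ab bc by auto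
  have "card {n. a \<le> n \<and> n < c \<and> box u (tr K n)} = card {n. a \<le> n \<and> n < b \<and> box u (tr K n)} + card {n. b \<le> n \<and> n < c \<and> box u (tr K n)}"
    unfolding eq by (rule card_Un_disjoint) auto
  moreover have "real (c - a) = real (b - a) + real (c - b)" using ab bc by simp
  ultimately show ?thesis unfolding E_def by (simp add: algebra_simps)
qed

lemma E_block:
  assumes a: "aligned (card (UNIV :: 'f set)) \<alpha> p j" and K: "j \<le> K" and u: "\<forall>i\<in>{1..s}. 0 \<le> u i \<and> u i \<le> 1"
    and \<Delta>_bound: "\<And>t m P. t \<le> m \<Longrightarrow> is_net (card (UNIV :: 'f set)) t m s P \<Longrightarrow> real (card (UNIV :: 'f set)) ^ m * star_disc s ((card (UNIV :: 'f set)) ^ m) P \<le> \<Delta> t m s"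
  shows "\<bar>E K p (p + (card (UNIV :: 'f set)) ^ j) u\<bar> \<le> \<Delta> (T j) j s"
proof -
  define P where "P = (\<lambda>n i. tr K (p + n) i)"
  have "bij_betw (\<lambda>n. p + n) {n. n < (card (UNIV :: 'f set)) ^ j \<and> box u (P n)} {n. p \<le> n \<and> n < p + (card (UNIV :: 'f set)) ^ j \<and> box u (tr K n)}"
  proof (rule bij_betw_byWitness[where f' = "\<lambda>n. n - p"])
    show "\<forall>a\<in>{n. n < (card (UNIV :: 'f set)) ^ j \<and> box u (P n)}. p + a - p = a" by simp
    show "\<forall>a\<in>{n. p \<le> n \<and> n < p + (card (UNIV :: 'f set)) ^ j \<and> box u (tr K n)}. p + (a - p) = a" by simp
    show "(\<lambda>n. p + n) ` {n. n < (card (UNIV :: 'f set)) ^ j \<and> box u (P n)} \<subseteq> {n. p \<le> n \<and> n < p + (card (UNIV :: 'f set)) ^ j \<and> box u (tr K n)}"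
      unfolding P_def by auto
    show "(\<lambda>n. n - p) ` {n. p \<le> n \<and> n < p + (card (UNIV :: 'f set)) ^ j \<and> box u (tr K n)} \<subseteq> {n. n < (card (UNIV :: 'f set)) ^ j \<and> box u (P n)}"
      unfolding P_def by auto
  qed
  then have c: "card {n. p \<le> n \<and> n < p + (card (UNIV :: 'f set)) ^ j \<and> box u (tr K n)} = card {n. n < (card (UNIV :: 'f set)) ^ j \<and> box u (P n)}"
    by (rule bij_betw_same_card[symmetric])
  have qj: "real (card (UNIV :: 'f set)) ^ j > 0" using q_pos by simp
  have "\<bar>E K p (p + (card (UNIV :: 'f set)) ^ j) u\<bar> = real (card (UNIV :: 'f set)) ^ j * \<bar>real (card {n. n < (card (UNIV :: 'f set)) ^ j \<and> box u (P n)}) / real ((card (UNIV :: 'f set)) ^ j) - vol u\<bar>"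
    unfolding E_def c using qj by (simp add: abs_mult[symmetric] field_simps)
  also have "\<dots> \<le> real (card (UNIV :: 'f set)) ^ j * star_disc s ((card (UNIV :: 'f set)) ^ j) P"
  proof (rule mult_left_mono)
    show "\<bar>real (card {n. n < (card (UNIV :: 'f set)) ^ j \<and> box u (P n)}) / real ((card (UNIV :: 'f set)) ^ j) - vol u\<bar> \<le> star_disc s ((card (UNIV :: 'f set)) ^ j) P"
      unfolding box_def vol_def by (rule star_disc_ge[OF u])
    show "0 \<le> real (card (UNIV :: 'f set)) ^ j" using qj by simp
  qed
  also have "\<dots> \<le> \<Delta> (T j) j s"
    using \<Delta>_bound[OF T_le net_block[OF a K]] unfolding P_def by simp
  finally show ?thesis .
qed

lemma E_multi:
  assumes a: "aligned (card (UNIV :: 'f set)) \<alpha> p j" and K: "j \<le> K" and u: "\<forall>i\<in>{1..s}. 0 \<le> u i \<and> u i \<le> 1"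
    and \<Delta>_bound: "\<And>t m P. t \<le> m \<Longrightarrow> is_net (card (UNIV :: 'f set)) t m s P \<Longrightarrow> real (card (UNIV :: 'f set)) ^ m * star_disc s ((card (UNIV :: 'f set)) ^ m) P \<le> \<Delta> t m s"
  shows "\<bar>E K p (p + c * (card (UNIV :: 'f set)) ^ j) u\<bar> \<le> real c * \<Delta> (T j) j s"
proof (induction c)
  case 0 then show ?case by (simp add: E_def)
next
  case (Suc c)
  have a': "aligned (card (UNIV :: 'f set)) \<alpha> (p + c * (card (UNIV :: 'f set)) ^ j) j" by (rule aligned_step[OF a])
  have "E K p (p + Suc c * (card (UNIV :: 'f set)) ^ j) u = E K p (p + c * (card (UNIV :: 'f set)) ^ j) u + E K (p + c * (card (UNIV :: 'f set)) ^ j) (p + c * (card (UNIV :: 'f set)) ^ j + (card (UNIV :: 'f set)) ^ j) u"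
    by (subst E_split[symmetric]) (auto simp: algebra_simps)
  also have "\<bar>\<dots>\<bar> \<le> real c * \<Delta> (T j) j s + \<Delta> (T j) j s"
    using Suc.IH E_block[where \<Delta> = \<Delta>, OF a' K u \<Delta>_bound] by (intro order.trans[OF abs_triangle_ineq] add_mono)
  finally show ?case by (simp add: algebra_simps)
qed

end

locale disc_setting = alg_setting s T C \<psi> lam \<alpha> for s T and C :: "nat \<Rightarrow> nat \<Rightarrow> nat \<Rightarrow> 'f::{field,finite}" and \<psi> lam \<alpha> +
  fixes \<Delta> :: "nat \<Rightarrow> nat \<Rightarrow> nat \<Rightarrow> real"
  assumes \<Delta>_bound: "\<And>t m P. t \<le> m \<Longrightarrow> is_net (card (UNIV :: 'f set)) t m s P \<Longrightarrow> real (card (UNIV :: 'f set)) ^ m * star_disc s ((card (UNIV :: 'f set)) ^ m) P \<le> \<Delta> t m s"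
begin

lemma Lf_alpha_less: "Lf (card (UNIV :: 'f set)) \<alpha> m < (card (UNIV :: 'f set)) ^ m"
  by (rule Lf_less) (rule \<alpha>_digits)

lemma aligned_start: "aligned (card (UNIV :: 'f set)) \<alpha> ((card (UNIV :: 'f set)) ^ m - Lf (card (UNIV :: 'f set)) \<alpha> m) m"
proof -
  have "(card (UNIV :: 'f set)) ^ m - Lf (card (UNIV :: 'f set)) \<alpha> m + Lf (card (UNIV :: 'f set)) \<alpha> m = (card (UNIV :: 'f set)) ^ m" using Lf_alpha_less[of m] by simp
  then show ?thesis unfolding aligned_def by simp
qed

lemma Em:
  assumes a: "aligned (card (UNIV :: 'f set)) \<alpha> p j" and K: "j \<le> K" and u: "\<forall>i\<in>{1..s}. 0 \<le> u i \<and> u i \<le> 1"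
  shows "\<bar>E K p (p + c * (card (UNIV :: 'f set)) ^ j) u\<bar> \<le> real c * \<Delta> (T j) j s"
  by (rule E_multi[where \<Delta> = \<Delta>, OF a K u \<Delta>_bound])

lemma Delta_nonneg: "0 \<le> \<Delta> (T j) j s"
proof -
  have u: "\<forall>i\<in>{1..s}. 0 \<le> (\<lambda>_. 0::real) i \<and> (\<lambda>_. 0::real) i \<le> 1" by simp
  have "\<bar>E j ((card (UNIV :: 'f set)) ^ j - Lf (card (UNIV :: 'f set)) \<alpha> j) ((card (UNIV :: 'f set)) ^ j - Lf (card (UNIV :: 'f set)) \<alpha> j + 1 * (card (UNIV :: 'f set)) ^ j) (\<lambda>_. 0)\<bar> \<le> real 1 * \<Delta> (T j) j s"
    by (rule Em[OF aligned_start order_refl u])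
  then show ?thesis by linarith
qed

lemma stage1:
  assumes m: "1 \<le> m" and K: "m \<le> K" and u: "\<forall>i\<in>{1..s}. 0 \<le> u i \<and> u i \<le> 1"
  shows "\<bar>E K 0 ((card (UNIV :: 'f set)) ^ m - Lf (card (UNIV :: 'f set)) \<alpha> m) u\<bar> \<le> (real (card (UNIV :: 'f set)) - real (\<alpha> 0)) * \<Delta> (T 0) 0 s
           + (\<Sum>j=1..<m. (real (card (UNIV :: 'f set)) - 1 - real (\<alpha> j)) * \<Delta> (T j) j s)"
  using m K
proof (induction m rule: nat_induct_at_least)
  case base
  have "(card (UNIV :: 'f set)) ^ 1 - Lf (card (UNIV :: 'f set)) \<alpha> 1 = 0 + ((card (UNIV :: 'f set)) - \<alpha> 0) * (card (UNIV :: 'f set)) ^ 0" by (simp add: Lf_def)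
  then have "\<bar>E K 0 ((card (UNIV :: 'f set)) ^ 1 - Lf (card (UNIV :: 'f set)) \<alpha> 1) u\<bar> \<le> real ((card (UNIV :: 'f set)) - \<alpha> 0) * \<Delta> (T 0) 0 s"
    using Em[OF aligned_0 _ u, of K 0 "(card (UNIV :: 'f set)) - \<alpha> 0"] by simp
  moreover have "real ((card (UNIV :: 'f set)) - \<alpha> 0) = real (card (UNIV :: 'f set)) - real (\<alpha> 0)" using \<alpha>_digits[of 0] by simp
  ultimately show ?case by simp
next
  case (Suc m)
  define L where "L = Lf (card (UNIV :: 'f set)) \<alpha> m"
  define Q where "Q = (card (UNIV :: 'f set)) ^ m"
  define b where "b = (card (UNIV :: 'f set)) - 1 - \<alpha> m"
  have LQ: "L < Q" unfolding L_def Q_def by (rule Lf_alpha_less)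
  have qb: "(card (UNIV :: 'f set)) = \<alpha> m + 1 + b" unfolding b_def using \<alpha>_digits[of m] by simp
  have LS: "Lf (card (UNIV :: 'f set)) \<alpha> (Suc m) = L + \<alpha> m * Q" unfolding L_def Q_def Lf_def by simp
  have QS: "(card (UNIV :: 'f set)) ^ Suc m = \<alpha> m * Q + Q + b * Q"
  proof -
    have "(card (UNIV :: 'f set)) ^ Suc m = (card (UNIV :: 'f set)) * Q" unfolding Q_def by simp
    also have "\<dots> = (\<alpha> m + 1 + b) * Q" by (simp only: qb)
    finally show ?thesis by (simp add: algebra_simps)
  qed
  have pS: "(card (UNIV :: 'f set)) ^ Suc m - Lf (card (UNIV :: 'f set)) \<alpha> (Suc m) = (Q - L) + b * Q" unfolding LS QS using LQ by simp
  have al: "aligned (card (UNIV :: 'f set)) \<alpha> (Q - L) m" unfolding Q_def L_def by (rule aligned_start)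
  have "E K 0 ((card (UNIV :: 'f set)) ^ Suc m - Lf (card (UNIV :: 'f set)) \<alpha> (Suc m)) u = E K 0 (Q - L) u + E K (Q - L) (Q - L + b * Q) u"
    unfolding pS by (rule E_split) auto
  moreover have "\<bar>E K 0 (Q - L) u\<bar> \<le> (real (card (UNIV :: 'f set)) - real (\<alpha> 0)) * \<Delta> (T 0) 0 s
           + (\<Sum>j=1..<m. (real (card (UNIV :: 'f set)) - 1 - real (\<alpha> j)) * \<Delta> (T j) j s)"
    using Suc unfolding Q_def L_def by simp
  moreover have "\<bar>E K (Q - L) (Q - L + b * Q) u\<bar> \<le> real b * \<Delta> (T m) m s"
    unfolding Q_def using Em[OF al[unfolded Q_def] _ u] Suc.prems by simp
  moreover have "real b = real (card (UNIV :: 'f set)) - 1 - real (\<alpha> m)" unfolding b_def using \<alpha>_digits[of m] by simp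
  moreover have "(\<Sum>j=1..<Suc m. (real (card (UNIV :: 'f set)) - 1 - real (\<alpha> j)) * \<Delta> (T j) j s)
      = (\<Sum>j=1..<m. (real (card (UNIV :: 'f set)) - 1 - real (\<alpha> j)) * \<Delta> (T j) j s) + (real (card (UNIV :: 'f set)) - 1 - real (\<alpha> m)) * \<Delta> (T m) m s"
    using Suc.hyps by simp
  ultimately show ?case by (smt (verit) abs_triangle_ineq)
qed

lemma stage2:
  assumes a: "aligned (card (UNIV :: 'f set)) \<alpha> p m" and K: "m \<le> K" and M: "M < (card (UNIV :: 'f set)) ^ Suc m" and u: "\<forall>i\<in>{1..s}. 0 \<le> u i \<and> u i \<le> 1"
  shows "\<bar>E K p (p + M) u\<bar> \<le> (\<Sum>j=0..m. real (M div (card (UNIV :: 'f set)) ^ j mod (card (UNIV :: 'f set))) * \<Delta> (T j) j s)"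
  using a K M
proof (induction m arbitrary: p M)
  case 0
  have "\<bar>E K p (p + M * (card (UNIV :: 'f set)) ^ 0) u\<bar> \<le> real M * \<Delta> (T 0) 0 s"
    by (rule Em[OF 0(1) _ u]) simp
  moreover have "M mod (card (UNIV :: 'f set)) = M" using 0 by simp
  ultimately show ?case by simp
next
  case (Suc m)
  define c where "c = M div (card (UNIV :: 'f set)) ^ Suc m"
  define M' where "M' = M mod (card (UNIV :: 'f set)) ^ Suc m"
  have q: "(card (UNIV :: 'f set)) > 0" by (rule q_pos)
  have Mdec: "M = c * (card (UNIV :: 'f set)) ^ Suc m + M'" unfolding c_def M'_def by (rule div_mult_mod_eq[symmetric])
  have cq: "c < (card (UNIV :: 'f set))" unfolding c_def using Suc.prems(3) q
    by (simp add: div_less_iff_less_mult mult.commute)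
  have M'l: "M' < (card (UNIV :: 'f set)) ^ Suc m" unfolding M'_def using q by simp
  have a': "aligned (card (UNIV :: 'f set)) \<alpha> (p + c * (card (UNIV :: 'f set)) ^ Suc m) (Suc m)" by (rule aligned_step[OF Suc.prems(1)])
  have a'': "aligned (card (UNIV :: 'f set)) \<alpha> (p + c * (card (UNIV :: 'f set)) ^ Suc m) m" by (rule aligned_mono[OF a']) simp
  have "E K p (p + M) u = E K p (p + c * (card (UNIV :: 'f set)) ^ Suc m) u + E K (p + c * (card (UNIV :: 'f set)) ^ Suc m) (p + c * (card (UNIV :: 'f set)) ^ Suc m + M') u"
    unfolding Mdec by (subst E_split[symmetric]) (auto simp: algebra_simps)
  moreover have "\<bar>E K p (p + c * (card (UNIV :: 'f set)) ^ Suc m) u\<bar> \<le> real c * \<Delta> (T (Suc m)) (Suc m) s"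
    by (rule Em[OF Suc.prems(1) Suc.prems(2) u])
  moreover have "\<bar>E K (p + c * (card (UNIV :: 'f set)) ^ Suc m) (p + c * (card (UNIV :: 'f set)) ^ Suc m + M') u\<bar>
      \<le> (\<Sum>j=0..m. real (M' div (card (UNIV :: 'f set)) ^ j mod (card (UNIV :: 'f set))) * \<Delta> (T j) j s)"
    by (rule Suc.IH[OF a'']) (use Suc.prems(2) M'l in auto)
  moreover have "M' div (card (UNIV :: 'f set)) ^ j mod (card (UNIV :: 'f set)) = M div (card (UNIV :: 'f set)) ^ j mod (card (UNIV :: 'f set))" if "j \<le> m" for j
  proof -
    have d: "(card (UNIV :: 'f set)) ^ Suc j dvd (card (UNIV :: 'f set)) ^ Suc m" using that by (intro le_imp_power_dvd) simp
    have "M' div (card (UNIV :: 'f set)) ^ j mod (card (UNIV :: 'f set)) = M' mod (card (UNIV :: 'f set)) ^ Suc j div (card (UNIV :: 'f set)) ^ j" by (rule digit_mod[OF q])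
    also have "M' mod (card (UNIV :: 'f set)) ^ Suc j = M mod (card (UNIV :: 'f set)) ^ Suc j" unfolding M'_def by (rule mod_mod_cancel[OF d])
    also have "M mod (card (UNIV :: 'f set)) ^ Suc j div (card (UNIV :: 'f set)) ^ j = M div (card (UNIV :: 'f set)) ^ j mod (card (UNIV :: 'f set))" by (rule digit_mod[OF q, symmetric])
    finally show ?thesis .
  qed
  then have "(\<Sum>j=0..m. real (M' div (card (UNIV :: 'f set)) ^ j mod (card (UNIV :: 'f set))) * \<Delta> (T j) j s) = (\<Sum>j=0..m. real (M div (card (UNIV :: 'f set)) ^ j mod (card (UNIV :: 'f set))) * \<Delta> (T j) j s)"
    by (intro sum.cong) auto
  moreover have "c = M div (card (UNIV :: 'f set)) ^ Suc m mod (card (UNIV :: 'f set))" using cq unfolding c_def by simp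
  ultimately show ?case by (smt (verit) abs_triangle_ineq sum.atLeast0_atMost_Suc)
qed

end

lemma prod_diff_le:
  fixes a b :: "nat \<Rightarrow> real"
  assumes "finite I" and "\<forall>i\<in>I. 0 \<le> b i \<and> b i \<le> a i \<and> a i \<le> 1 \<and> a i - b i \<le> \<delta>"
  shows "prod a I - prod b I \<le> real (card I) * \<delta>"
  using assms
proof (induction I rule: finite_induct)
  case empty then show ?case by simp
next
  case (insert x F)
  have h: "0 \<le> b x" "b x \<le> a x" "a x \<le> 1" "a x - b x \<le> \<delta>" using insert.prems by auto
  have IH: "prod a F - prod b F \<le> real (card F) * \<delta>" using insert by auto
  have bF: "0 \<le> b i \<and> b i \<le> 1" if "i \<in> F" for i
  proof -
    have "0 \<le> b i \<and> b i \<le> a i \<and> a i \<le> 1" using insert.prems that by simp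
    then show ?thesis by linarith
  qed
  have PB: "0 \<le> prod b F" "prod b F \<le> 1"
    using bF by (auto intro: prod_nonneg prod_le_1)
  have PAB: "prod b F \<le> prod a F" using insert.prems by (intro prod_mono) auto
  have "prod a (insert x F) - prod b (insert x F) = a x * (prod a F - prod b F) + (a x - b x) * prod b F"
    using insert.hyps by (simp add: algebra_simps)
  also have "\<dots> \<le> 1 * (prod a F - prod b F) + \<delta> * 1"
  proof (rule add_mono)
    show "a x * (prod a F - prod b F) \<le> 1 * (prod a F - prod b F)" using h PAB by (intro mult_right_mono) auto
    show "(a x - b x) * prod b F \<le> \<delta> * 1" using h PB by (intro mult_mono) auto
  qed
  also have "\<dots> \<le> real (card (insert x F)) * \<delta>" using IH insert.hyps by (simp add: algebra_simps)
  finally show ?case .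
qed

context disc_setting
begin

definition RHS :: "nat \<Rightarrow> nat \<Rightarrow> real" where
  "RHS N r = (real (card (UNIV :: 'f set)) - real (\<alpha> 0)) * \<Delta> (T 0) 0 s
              + (\<Sum>j=1..<r. (real (card (UNIV :: 'f set)) - 1 - real (\<alpha> j)) * \<Delta> (T j) j s)
              + (\<Sum>j=0..r. real ((N - (card (UNIV :: 'f set)) ^ r + (\<Sum>j<r. \<alpha> j * (card (UNIV :: 'f set)) ^ j)) div (card (UNIV :: 'f set)) ^ j mod (card (UNIV :: 'f set))) * \<Delta> (T j) j s)"

lemma final_E:
  assumes N1: "1 \<le> N" and r1: "(card (UNIV :: 'f set)) ^ r \<le> N" and r2: "N < (card (UNIV :: 'f set)) ^ Suc r" and K: "r \<le> K"
    and u: "\<forall>i\<in>{1..s}. 0 \<le> u i \<and> u i \<le> 1"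
  shows "\<bar>E K 0 N u\<bar> \<le> RHS N r"
proof (cases "r = 0")
  case True
  have NQ: "N < (card (UNIV :: 'f set))" using r2 True by simp
  have "\<bar>E K 0 (0 + N * (card (UNIV :: 'f set)) ^ 0) u\<bar> \<le> real N * \<Delta> (T 0) 0 s" by (rule Em[OF aligned_0 _ u]) simp
  then have 1: "\<bar>E K 0 N u\<bar> \<le> real N * \<Delta> (T 0) 0 s" by simp
  have "(N - 1) mod (card (UNIV :: 'f set)) = N - 1" using NQ by simp
  then have 2: "RHS N r = (real (card (UNIV :: 'f set)) - real (\<alpha> 0) + real (N - 1)) * \<Delta> (T 0) 0 s"
    unfolding RHS_def True by (simp add: algebra_simps)
  have 3: "real N \<le> real (card (UNIV :: 'f set)) - real (\<alpha> 0) + real (N - 1)" using \<alpha>_digits[of 0] N1 by simp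
  have "real N * \<Delta> (T 0) 0 s \<le> (real (card (UNIV :: 'f set)) - real (\<alpha> 0) + real (N - 1)) * \<Delta> (T 0) 0 s"
    by (rule mult_right_mono[OF 3 Delta_nonneg])
  then show ?thesis using 1 2 by simp
next
  case False
  then have r: "1 \<le> r" by simp
  define L where "L = Lf (card (UNIV :: 'f set)) \<alpha> r"
  have L: "L = (\<Sum>j<r. \<alpha> j * (card (UNIV :: 'f set)) ^ j)" unfolding L_def Lf_def ..
  have LQ: "L < (card (UNIV :: 'f set)) ^ r" unfolding L_def by (rule Lf_alpha_less)
  define p where "p = (card (UNIV :: 'f set)) ^ r - L"
  define N' where "N' = N - (card (UNIV :: 'f set)) ^ r + L"
  have Np: "N = p + N'" unfolding p_def N'_def using LQ r1 by simp
  have N'l: "N' < (card (UNIV :: 'f set)) ^ Suc r" unfolding N'_def using LQ r1 r2 by simp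
  have "E K 0 N u = E K 0 p u + E K p (p + N') u" unfolding Np by (rule E_split) auto
  moreover have "\<bar>E K 0 p u\<bar> \<le> (real (card (UNIV :: 'f set)) - real (\<alpha> 0)) * \<Delta> (T 0) 0 s
           + (\<Sum>j=1..<r. (real (card (UNIV :: 'f set)) - 1 - real (\<alpha> j)) * \<Delta> (T j) j s)"
    unfolding p_def L_def by (rule stage1[OF r K u])
  moreover have "\<bar>E K p (p + N') u\<bar> \<le> (\<Sum>j=0..r. real (N' div (card (UNIV :: 'f set)) ^ j mod (card (UNIV :: 'f set))) * \<Delta> (T j) j s)"
    unfolding p_def L_def by (rule stage2[OF aligned_start K N'l u])
  ultimately show ?thesis unfolding RHS_def N'_def L by (smt (verit) abs_triangle_ineq)
qed


lemma tr_approx: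
  assumes i: "i \<in> {1..s}"
  shows "tr K n i \<le> alg2_point C \<psi> lam \<alpha> n i \<and> alg2_point C \<psi> lam \<alpha> n i \<le> tr K n i + 1 / real (card (UNIV :: 'f set)) ^ K"
proof -
  define f where "f j = real (dig i (Suc j) n) / real (card (UNIV :: 'f set)) ^ Suc j" for j
  define x where "x = 1 / real (card (UNIV :: 'f set))"
  define g where "g j = (real (card (UNIV :: 'f set)) - 1) / real (card (UNIV :: 'f set)) * x ^ j" for j
  have q2: "real (card (UNIV :: 'f set)) \<ge> 2" using q_ge2 by simp
  have x: "0 \<le> x" "x < 1" unfolding x_def using q2 by auto
  have ap: "alg2_point C \<psi> lam \<alpha> n i = suminf f" unfolding alg2_point_def f_def dig_def ..
  have f0: "0 \<le> f j" for j unfolding f_def by simp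
  have fg: "f j \<le> g j" for j
  proof -
    have "dig i (Suc j) n < (card (UNIV :: 'f set))" by (rule dig_less[OF i]) simp
    then have "real (dig i (Suc j) n) \<le> real (card (UNIV :: 'f set)) - 1" by linarith
    then have "f j \<le> (real (card (UNIV :: 'f set)) - 1) / real (card (UNIV :: 'f set)) ^ Suc j" unfolding f_def using q2
      by (intro divide_right_mono) auto
    also have "\<dots> = g j" unfolding g_def x_def by (simp add: power_divide field_simps)
    finally show ?thesis .
  qed
  have sg: "summable g" unfolding g_def using x by (intro summable_mult summable_geometric) simp
  have sf: "summable f" by (rule summable_comparison_test'[OF sg]) (use f0 fg in simp)
  have split: "suminf f = (\<Sum>j. f (j + K)) + (\<Sum>j<K. f j)" by (rule suminf_split_initial_segment[OF sf])
  have trK: "(\<Sum>j<K. f j) = tr K n i" unfolding tr_def f_def using Yf_real[OF q_pos] by simp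
  have sfK: "summable (\<lambda>j. f (j + K))" using sf by (rule summable_ignore_initial_segment)
  have sgK: "summable (\<lambda>j. g (j + K))" using sg by (rule summable_ignore_initial_segment)
  have t0: "0 \<le> (\<Sum>j. f (j + K))" by (rule suminf_nonneg[OF sfK]) (use f0 in simp)
  have "(\<Sum>j. f (j + K)) \<le> (\<Sum>j. g (j + K))" by (rule suminf_le) (use fg sfK sgK in auto)
  also have "(\<Sum>j. g (j + K)) = (real (card (UNIV :: 'f set)) - 1) / real (card (UNIV :: 'f set)) * x ^ K * (\<Sum>j. x ^ j)"
    unfolding g_def by (subst suminf_mult[symmetric]) (use x in \<open>simp_all add: power_add mult_ac summable_geometric\<close>)
  also have "\<dots> = 1 / real (card (UNIV :: 'f set)) ^ K"
  proof -
    have geo: "(\<Sum>j. x ^ j) = 1 / (1 - x)" by (rule suminf_geometric) (use x in simp)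
    have "1 - x = (real (card (UNIV :: 'f set)) - 1) / real (card (UNIV :: 'f set))" unfolding x_def using q2 by (simp add: field_simps)
    then have "(real (card (UNIV :: 'f set)) - 1) / real (card (UNIV :: 'f set)) * x ^ K * (\<Sum>j. x ^ j) = x ^ K"
      unfolding geo using q2 by (simp add: field_simps)
    then show ?thesis unfolding x_def by (simp add: power_one_over)
  qed
  finally have t1: "(\<Sum>j. f (j + K)) \<le> 1 / real (card (UNIV :: 'f set)) ^ K" .
  show ?thesis unfolding ap split trK using t0 t1 by simp
qed

lemma main_bound_K:
  assumes N1: "1 \<le> N" and r1: "(card (UNIV :: 'f set)) ^ r \<le> N" and r2: "N < (card (UNIV :: 'f set)) ^ Suc r" and K: "r \<le> K"
  shows "real N * star_disc s N (alg2_point C \<psi> lam \<alpha>) \<le> RHS N r + real N * real s * (1 / real (card (UNIV :: 'f set)) ^ K)"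
proof -
  define x where "x = alg2_point C \<psi> lam \<alpha>"
  define \<delta> :: real where "\<delta> = 1 / real (card (UNIV :: 'f set)) ^ K"
  define R where "R = RHS N r"
  have \<delta>0: "0 \<le> \<delta>" unfolding \<delta>_def by simp
  have Npos: "real N > 0" using N1 by simp
  have bound: "\<bar>real (card {n. n < N \<and> (\<forall>i\<in>{1..s}. 0 \<le> x n i \<and> x n i < u i)}) / real N - (\<Prod>i=1..s. u i)\<bar>
      \<le> (R + real N * real s * \<delta>) / real N"
    if u: "u \<in> {u. \<forall>i\<in>{1..s}. 0 \<le> u i \<and> u i \<le> 1}" for u
  proof -
    have u': "\<forall>i\<in>{1..s}. 0 \<le> u i \<and> u i \<le> 1" using u by simp
    define A where "A = card {n. n < N \<and> box u (x n)}"
    define AK where "AK w = card {n. n < N \<and> box w (tr K n)}" for w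
    define v where "v i = max (u i - \<delta>) 0" for i
    have v: "\<forall>i\<in>{1..s}. 0 \<le> v i \<and> v i \<le> 1" using u' \<delta>0 unfolding v_def by auto
    have EK: "E K 0 N w = real (AK w) - real N * vol w" for w unfolding E_def AK_def by simp
    have fin: "finite {n. n < N \<and> P n}" for P by simp
    have a: "A \<le> AK u" unfolding A_def AK_def
    proof (rule card_mono[OF fin])
      show "{n. n < N \<and> box u (x n)} \<subseteq> {n. n < N \<and> box u (tr K n)}"
      proof (rule subsetI)
        fix n assume "n \<in> {n. n < N \<and> box u (x n)}"
        then have n: "n < N" "\<forall>i\<in>{1..s}. 0 \<le> x n i \<and> x n i < u i" unfolding box_def by auto
        have "\<forall>i\<in>{1..s}. 0 \<le> tr K n i \<and> tr K n i < u i"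
        proof
          fix i assume i: "i \<in> {1..s}"
          have "0 \<le> tr K n i" using tr_bounds[OF i] by simp
          moreover have "tr K n i \<le> x n i" using tr_approx[OF i] unfolding x_def by simp
          ultimately show "0 \<le> tr K n i \<and> tr K n i < u i" using n(2) i by fastforce
        qed
        then show "n \<in> {n. n < N \<and> box u (tr K n)}" using n unfolding box_def by simp
      qed
    qed
    have b: "AK v \<le> A" unfolding A_def AK_def
    proof (rule card_mono[OF fin])
      show "{n. n < N \<and> box v (tr K n)} \<subseteq> {n. n < N \<and> box u (x n)}"
      proof (rule subsetI)
        fix n assume "n \<in> {n. n < N \<and> box v (tr K n)}"
        then have n: "n < N" "\<forall>i\<in>{1..s}. 0 \<le> tr K n i \<and> tr K n i < v i" unfolding box_def by auto
        have "\<forall>i\<in>{1..s}. 0 \<le> x n i \<and> x n i < u i"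
        proof
          fix i assume i: "i \<in> {1..s}"
          have t: "0 \<le> tr K n i" "tr K n i < max (u i - \<delta>) 0" using n(2) i unfolding v_def by auto
          have "tr K n i \<le> x n i" "x n i \<le> tr K n i + \<delta>" using tr_approx[OF i] unfolding x_def \<delta>_def by auto
          then show "0 \<le> x n i \<and> x n i < u i" using t by (auto simp: max_def split: if_splits)
        qed
        then show "n \<in> {n. n < N \<and> box u (x n)}" using n unfolding box_def by simp
      qed
    qed
    have c: "vol u - vol v \<le> real s * \<delta>"
    proof -
      have "vol u - vol v \<le> real (card {1..s}) * \<delta>" unfolding vol_def
        by (rule prod_diff_le) (use u' \<delta>0 in \<open>auto simp: v_def\<close>)
      then show ?thesis by simp
    qed
    have EuR: "\<bar>E K 0 N u\<bar> \<le> R" unfolding R_def by (rule final_E[OF N1 r1 r2 K u'])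
    have EvR: "\<bar>E K 0 N v\<bar> \<le> R" unfolding R_def by (rule final_E[OF N1 r1 r2 K v])
    have up: "real A - real N * vol u \<le> R" using a EuR EK[of u] by linarith
    have lo: "real N * vol u - real A \<le> R + real N * real s * \<delta>"
    proof -
      have "real N * (vol u - vol v) \<le> real N * (real s * \<delta>)" using c Npos by (intro mult_left_mono) auto
      then show ?thesis using b EvR EK[of v] by (simp add: algebra_simps)
    qed
    have "\<bar>real A - real N * vol u\<bar> \<le> R + real N * real s * \<delta>"
    proof -
      have nsd: "0 \<le> real N * real s * \<delta>" using \<delta>0 by simp
      show ?thesis using up lo nsd by (simp only: abs_le_iff) linarith
    qed
    then have "\<bar>real A / real N - vol u\<bar> \<le> (R + real N * real s * \<delta>) / real N"
    proof -
      assume h: "\<bar>real A - real N * vol u\<bar> \<le> R + real N * real s * \<delta>"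
      have "real A / real N - vol u = (real A - real N * vol u) / real N" using Npos by (simp add: field_simps)
      then have "\<bar>real A / real N - vol u\<bar> = \<bar>real A - real N * vol u\<bar> / real N" using Npos by (simp add: abs_divide)
      also have "\<dots> \<le> (R + real N * real s * \<delta>) / real N" using h Npos by (intro divide_right_mono) auto
      finally show ?thesis .
    qed
    then show ?thesis unfolding A_def box_def vol_def .
  qed
  have "star_disc s N x \<le> (R + real N * real s * \<delta>) / real N"
    unfolding star_disc_def
  proof (rule cSUP_least)
    show "{u. \<forall>i\<in>{1..s}. 0 \<le> u i \<and> u i \<le> (1::real)} \<noteq> {}" proof -
      have "(\<lambda>_. 0::real) \<in> {u. \<forall>i\<in>{1..s}. 0 \<le> u i \<and> u i \<le> (1::real)}" by simp
      then show ?thesis by auto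
    qed
  qed (rule bound)
  then have "real N * star_disc s N x \<le> R + real N * real s * \<delta>"
    using Npos by (simp add: field_simps)
  then show ?thesis unfolding x_def R_def \<delta>_def .
qed

lemma main_bound:
  assumes N1: "1 \<le> N" and r1: "(card (UNIV :: 'f set)) ^ r \<le> N" and r2: "N < (card (UNIV :: 'f set)) ^ Suc r"
  shows "real N * star_disc s N (alg2_point C \<psi> lam \<alpha>) \<le> RHS N r"
proof (rule field_le_epsilon)
  fix e :: real assume e: "0 < e"
  obtain k :: nat where k: "real N * real s / e < real k" using reals_Archimedean2 by blast
  define K where "K = max r k"
  have "real K < 2 ^ K" by (metis less_exp of_nat_less_iff of_nat_numeral of_nat_power)
  also have "(2::real) ^ K \<le> real (card (UNIV :: 'f set)) ^ K" using q_ge2 by (intro power_mono) auto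
  finally have KQ: "real K < real (card (UNIV :: 'f set)) ^ K" .
  have kK: "real k \<le> real K" unfolding K_def by simp
  have qK: "real (card (UNIV :: 'f set)) ^ K > 0" using q_pos by simp
  have "real N * real s / e < real (card (UNIV :: 'f set)) ^ K" using k kK KQ by linarith
  then have "real N * real s < e * real (card (UNIV :: 'f set)) ^ K" using e by (simp add: divide_less_eq mult.commute)
  then have lt: "real N * real s * (1 / real (card (UNIV :: 'f set)) ^ K) < e" using qK by (simp add: field_simps)
  have "real N * star_disc s N (alg2_point C \<psi> lam \<alpha>) \<le> RHS N r + real N * real s * (1 / real (card (UNIV :: 'f set)) ^ K)"
    by (rule main_bound_K[OF N1 r1 r2]) (simp add: K_def)
  then show "real N * star_disc s N (alg2_point C \<psi> lam \<alpha>) \<le> RHS N r + e" using lt by linarith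
qed

end

theorem proposition2:
  fixes s :: nat
    and T :: "nat \<Rightarrow> nat"
    and C :: "nat \<Rightarrow> nat \<Rightarrow> nat \<Rightarrow> 'f::{field,finite}"
    and \<psi> :: "nat \<Rightarrow> nat \<Rightarrow> 'f"
    and lam :: "nat \<Rightarrow> nat \<Rightarrow> 'f \<Rightarrow> nat"
    and \<alpha> :: "nat \<Rightarrow> nat"
    and \<Delta> :: "nat \<Rightarrow> nat \<Rightarrow> nat \<Rightarrow> real"
    and N :: nat
  assumes s_pos: "1 \<le> s"
    and T_le: "\<And>m. T m \<le> m"
    and finite_row: "\<And>i j. i \<in> {1..s} \<Longrightarrow> 1 \<le> j \<Longrightarrow> finite {r. C i j r \<noteq> 0}"
    and rank_cond: "\<And>m d. T m < m \<Longrightarrow> 1 \<le> (\<Sum>i=1..s. d i) \<Longrightarrow> (\<Sum>i=1..s. d i) \<le> m - T m \<Longrightarrow>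
         vec_space.rank (\<Sum>i=1..s. d i) (gen_submatrix s C d m) = (\<Sum>i=1..s. d i)"
    and \<alpha>_digits: "\<And>k. \<alpha> k < (card (UNIV :: 'f set))"
    and \<psi>_bij: "\<And>r. bij_betw (\<psi> r) {..<(card (UNIV :: 'f set))} UNIV"
    and lam_bij: "\<And>i j. i \<in> {1..s} \<Longrightarrow> 1 \<le> j \<Longrightarrow> bij_betw (lam i j) UNIV {..<(card (UNIV :: 'f set))}"
    and \<Delta>_bound: "\<And>t m P. t \<le> m \<Longrightarrow> is_net (card (UNIV :: 'f set)) t m s P \<Longrightarrow>
         real (card (UNIV :: 'f set)) ^ m * star_disc s ((card (UNIV :: 'f set)) ^ m) P \<le> \<Delta> t m s"
    and N_pos: "1 \<le> N"
  shows "let q = (card (UNIV :: 'f set)); r = nat \<lfloor>log (real q) (real N)\<rfloor>;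
             N' = N - q ^ r + (\<Sum>j<r. \<alpha> j * q ^ j);
             b = (\<lambda>j. (N' div q ^ j) mod q)
         in real N * star_disc s N (alg2_point C \<psi> lam \<alpha>)
            \<le> (real q - real (\<alpha> 0)) * \<Delta> (T 0) 0 s
              + (\<Sum>j=1..<r. (real q - 1 - real (\<alpha> j)) * \<Delta> (T j) j s)
              + (\<Sum>j=0..r. real (b j) * \<Delta> (T j) j s)"
  proof -
  interpret ds: disc_setting s T C \<psi> lam \<alpha> \<Delta>
    by unfold_locales (fact T_le finite_row rank_cond \<alpha>_digits \<psi>_bij lam_bij \<Delta>_bound)+
  define q where "q = card (UNIV :: 'f set)"
  have q2: "2 \<le> q" unfolding q_def by (rule ds.q_ge2)
  define r where "r = nat \<lfloor>log (real q) (real N)\<rfloor>"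
  have lg: "0 \<le> log (real q) (real N)" using q2 N_pos by simp
  have fl: "\<lfloor>log (real q) (real N)\<rfloor> = int r" unfolding r_def using lg by simp
  have Npos: "N > 0" using N_pos by simp
  have iff: "\<lfloor>log (real q) (real N)\<rfloor> = int r \<longleftrightarrow> q ^ r \<le> N \<and> N < q ^ (r + 1)"
    by (rule floor_log_nat_eq_powr_iff[OF q2 Npos])
  have rr: "q ^ r \<le> N \<and> N < q ^ (r + 1)" by (rule iffD1[OF iff fl])
  have "real N * star_disc s N (alg2_point C \<psi> lam \<alpha>) \<le> ds.RHS N r"
    by (rule ds.main_bound[OF N_pos]) (use rr in \<open>simp_all add: q_def\<close>)
  then show ?thesis unfolding Let_def ds.RHS_def q_def[symmetric] r_def[symmetric] .
qed

end
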